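(* There is a constant $c>0$ independent of $h$ such that for all $u_{h,1},u_{h,2}\in\mathcal S^{3,1}(\mathcal T_h)^d$ with $u_{h,1}-u_{h,2}\in\mathcal S^{3,1}_D(\mathcal T_h)^d$, all $\lambda_{h,1},\lambda_{h,2}\in\mathcal S^{2,0}_0(\mathcal T_h)$ and all $(v_h,\mu_h),(w_h,\eta_h)\in X_h$, $$\big|(DF_h(u_{h,1},\lambda_{h,1})-DF_h(u_{h,2},\lambda_{h,2}))[(v_h,\mu_h),(w_h,\eta_h)]\big|\le c\big(\|u_{h,1}-u_{h,2}\|_{H^2(I)^d}+\|\lambda_{h,1}-\lambda_{h,2}\|_{H^{-1}}\big)\|(v_h,\mu_h)\|_{X_h}\|(w_h,\eta_h)\|_{X_h}.$$
   Context: Mesh notation: $I=(a,b)\subset\mathbb R$, $a=x_0<x_1<\dots<x_M=b$, $I_i=[x_{i-1},x_i]$, $h_i=x_i-x_{i-1}$, $h=\max_i h_i$, $\mathcal T_h=\{I_1,\dots,I_M\}$. The meshes are quasi-uniform: there is $c>0$ independent of $h$ with $h\le c\,h_i$ for all $i$. Let $m_i=(x_{i-1}+x_i)/2$, $\mathcal N_1(\mathcal T_h)=\{x_0,\dots,x_M\}$, $\mathcal N_2(\mathcal T_h)=\mathcal N_1(\mathcal T_h)\cup\{m_1,\dots,m_M\}$. For $k\ge1$, $l\in\{0,1\}$, $\mathcal S^{k,l}(\mathcal T_h)=\{v\in C^l(\bar I): v|_{I_i}\in\mathcal P_k\ \forall i\}$. $\mathcal I_{h,2}$ is the nodal interpolant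 into $\mathcal S^{2,0}(\mathcal T_h)$ at $\mathcal N_2(\mathcal T_h)$ (componentwise); $(u,v)_{h,2}=\int_I\mathcal I_{h,2}(u\cdot v)\,dx$; $(\cdot,\cdot)$ is the $L^2(I)$ inner product. Problem notation: $H^2_D(I)=\{v\in H^2(I):v(a)=0,\ v'(a)=v'(b)=0\}$, $H^1_0(I)=\{v\in H^1(I): v(a)=v(b)=0\}$, $H^{-1}(I)=H^1_0(I)'$ with $\|\mu\|_{H^{-1}}=\sup\{\int_I\mu\phi\,dx:\phi\in H^1_0(I),\|\phi\|_{H^1}=1\}$ for $\mu\in L^2(I)$. $\mathcal S^{3,1}_D(\mathcal T_h)=\mathcal S^{3,1}(\mathcal T_h)\cap H^2_D(I)$, $\mathcal S^{2,0}_0(\mathcal T_h)=\mathcal S^{2,0}(\mathcal T_h)\cap H^1_0(I)$, $X_h=\mathcal S^{3,1}_D(\mathcal T_h)^d\times\mathcal S^{2,0}_0(\mathcal T_h)$ with norm $\|(v_h,\mu_h)\|_{X_h}=\|v_h\|_{H^2(I)^d}+\|\mu_h\|_{H^{-1}}$. Discrete forms: $a_{\lambda_h}(v_h,w_h)=(v_h'',w_h'')+(\lambda_h,v_h'\cdot w_h')_{h,2}$, $b_{u_h}(v_h,\eta_h)=(\eta_h,u_h'\cdot v_h')_{h,2}$, and the derivative of the discrete Lagrangian system is the bilinear form $$DF_h(u_h,\lambda_h)[(v_h,\mu_h),(w_h,\eta_h)]=a_{\lambda_h}(v_h,w_h)+b_{u_h}(w_h,\mu_h)+b_{u_h}(v_h,\eta_h).$$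 *)

theory Defs
  imports "HOL-Analysis.Analysis" "HOL-Computational_Algebra.Polynomial"
begin

definition is_mesh :: "real \<Rightarrow> real \<Rightarrow> nat \<Rightarrow> (nat \<Rightarrow> real) \<Rightarrow> bool" where
  "is_mesh a b M x \<longleftrightarrow> a < b \<and> 1 \<le> M \<and> x 0 = a \<and> x M = b \<and> (\<forall>i\<in>{1..M}. x (i - 1) < x i)"

definition meshsize :: "nat \<Rightarrow> (nat \<Rightarrow> real) \<Rightarrow> real" where
  "meshsize M x = Max ((\<lambda>i. x i - x (i - 1)) ` {1..M})"

definition quasi_uniform :: "real \<Rightarrow> nat \<Rightarrow> (nat \<Rightarrow> real) \<Rightarrow> bool" where
  "quasi_uniform c0 M x \<longleftrightarrow> (\<forall>i\<in>{1..M}. meshsize M x \<le> c0 * (x i - x (i - 1)))"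

definition Dv :: "real \<Rightarrow> real \<Rightarrow> (real \<Rightarrow> real) \<Rightarrow> real \<Rightarrow> real" where
  "Dv a b f t = vector_derivative f (at t within {a..b})"

definition C1_on :: "real \<Rightarrow> real \<Rightarrow> (real \<Rightarrow> real) \<Rightarrow> bool" where
  "C1_on a b v \<longleftrightarrow> (\<exists>D. (\<forall>t\<in>{a..b}. (v has_real_derivative D t) (at t within {a..b}))
                      \<and> continuous_on {a..b} D)"

definition pw_poly :: "nat \<Rightarrow> nat \<Rightarrow> (nat \<Rightarrow> real) \<Rightarrow> (real \<Rightarrow> real) \<Rightarrow> bool" where
  "pw_poly k M x v \<longleftrightarrow>
     (\<forall>i\<in>{1..M}. \<exists>p :: real poly. degree p \<le> k \<and> (\<forall>t\<in>{x (i - 1)..x i}. v t = poly p t))"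

text \<open>S^{k,l}(T_h) for l \<in> {0,1} (scalar functions; vector functions componentwise).\<close>
definition spline :: "nat \<Rightarrow> nat \<Rightarrow> nat \<Rightarrow> (nat \<Rightarrow> real) \<Rightarrow> (real \<Rightarrow> real) \<Rightarrow> bool" where
  "spline k l M x v \<longleftrightarrow>
     (if l = 0 then continuous_on {x 0..x M} v else C1_on (x 0) (x M) v) \<and> pw_poly k M x v"

definition S31D :: "nat \<Rightarrow> (nat \<Rightarrow> real) \<Rightarrow> (real \<Rightarrow> real) \<Rightarrow> bool" where
  "S31D M x v \<longleftrightarrow> spline 3 1 M x v \<and> v (x 0) = 0
      \<and> Dv (x 0) (x M) v (x 0) = 0 \<and> Dv (x 0) (x M) v (x M) = 0"

definition S20_0 :: "nat \<Rightarrow> (nat \<Rightarrow> real) \<Rightarrow> (real \<Rightarrow> real) \<Rightarrow> bool" where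
  "S20_0 M x v \<longleftrightarrow> spline 2 0 M x v \<and> v (x 0) = 0 \<and> v (x M) = 0"

text \<open>H^2(I)^d norm (weak derivatives coincide a.e. with classical ones for splines).\<close>
definition H2norm :: "real \<Rightarrow> real \<Rightarrow> ('d::finite \<Rightarrow> real \<Rightarrow> real) \<Rightarrow> real" where
  "H2norm a b v = sqrt (\<Sum>k\<in>UNIV. integral {a..b}
      (\<lambda>t. (v k t)\<^sup>2 + (Dv a b (v k) t)\<^sup>2 + (Dv a b (Dv a b (v k)) t)\<^sup>2))"

text \<open>H^1_0(I): absolutely continuous phi with weak derivative g \<in> L^2(I), phi(a) = phi(b) = 0.\<close>
definition is_H10 :: "real \<Rightarrow> real \<Rightarrow> (real \<Rightarrow> real) \<Rightarrow> (real \<Rightarrow> real) \<Rightarrow> bool" where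
  "is_H10 a b phi g \<longleftrightarrow> g absolutely_integrable_on {a..b} \<and> (\<lambda>t. (g t)\<^sup>2) integrable_on {a..b}
      \<and> (\<forall>t\<in>{a..b}. phi t = integral {a..t} g) \<and> phi b = 0"

definition H1norm_w :: "real \<Rightarrow> real \<Rightarrow> (real \<Rightarrow> real) \<Rightarrow> (real \<Rightarrow> real) \<Rightarrow> real" where
  "H1norm_w a b phi g = sqrt (integral {a..b} (\<lambda>t. (phi t)\<^sup>2 + (g t)\<^sup>2))"

definition Hm1norm :: "real \<Rightarrow> real \<Rightarrow> (real \<Rightarrow> real) \<Rightarrow> real" where
  "Hm1norm a b mu = Sup {integral {a..b} (\<lambda>t. mu t * phi t) | phi g.
       is_H10 a b phi g \<and> H1norm_w a b phi g = 1}"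

definition Xnorm :: "real \<Rightarrow> real \<Rightarrow> ('d::finite \<Rightarrow> real \<Rightarrow> real) \<Rightarrow> (real \<Rightarrow> real) \<Rightarrow> real" where
  "Xnorm a b v mu = H2norm a b v + Hm1norm a b mu"

definition quad_interp :: "real \<Rightarrow> real \<Rightarrow> (real \<Rightarrow> real) \<Rightarrow> real \<Rightarrow> real" where
  "quad_interp x0 x1 f t = (let m = (x0 + x1) / 2 in
       f x0 * ((t - m) * (t - x1)) / ((x0 - m) * (x0 - x1))
     + f m * ((t - x0) * (t - x1)) / ((m - x0) * (m - x1))
     + f x1 * ((t - x0) * (t - m)) / ((x1 - x0) * (x1 - m)))"

definition elem :: "nat \<Rightarrow> (nat \<Rightarrow> real) \<Rightarrow> real \<Rightarrow> nat" where
  "elem M x t = (LEAST i. 1 \<le> i \<and> i \<le> M \<and> t \<le> x i)"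

definition interp2 :: "nat \<Rightarrow> (nat \<Rightarrow> real) \<Rightarrow> (real \<Rightarrow> real) \<Rightarrow> real \<Rightarrow> real" where
  "interp2 M x f t = (let i = elem M x t in quad_interp (x (i - 1)) (x i) f t)"

definition dip :: "nat \<Rightarrow> (nat \<Rightarrow> real) \<Rightarrow> (real \<Rightarrow> real) \<Rightarrow> (real \<Rightarrow> real) \<Rightarrow> real" where
  "dip M x f g = integral {x 0..x M} (interp2 M x (\<lambda>t. f t * g t))"

definition a_form :: "nat \<Rightarrow> (nat \<Rightarrow> real) \<Rightarrow> (real \<Rightarrow> real) \<Rightarrow> ('d::finite \<Rightarrow> real \<Rightarrow> real)
     \<Rightarrow> ('d \<Rightarrow> real \<Rightarrow> real) \<Rightarrow> real" where
  "a_form M x lam v w =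
     (\<Sum>k\<in>UNIV. integral {x 0..x M}
        (\<lambda>t. Dv (x 0) (x M) (Dv (x 0) (x M) (v k)) t * Dv (x 0) (x M) (Dv (x 0) (x M) (w k)) t))
     + dip M x lam (\<lambda>t. \<Sum>k\<in>UNIV. Dv (x 0) (x M) (v k) t * Dv (x 0) (x M) (w k) t)"

definition b_form :: "nat \<Rightarrow> (nat \<Rightarrow> real) \<Rightarrow> ('d::finite \<Rightarrow> real \<Rightarrow> real)
     \<Rightarrow> ('d \<Rightarrow> real \<Rightarrow> real) \<Rightarrow> (real \<Rightarrow> real) \<Rightarrow> real" where
  "b_form M x u v eta =
     dip M x eta (\<lambda>t. \<Sum>k\<in>UNIV. Dv (x 0) (x M) (u k) t * Dv (x 0) (x M) (v k) t)"

definition DF :: "nat \<Rightarrow> (nat \<Rightarrow> real) \<Rightarrow> ('d::finite \<Rightarrow> real \<Rightarrow> real) \<Rightarrow> (real \<Rightarrow> real)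
     \<Rightarrow> ('d \<Rightarrow> real \<Rightarrow> real) \<Rightarrow> (real \<Rightarrow> real) \<Rightarrow> ('d \<Rightarrow> real \<Rightarrow> real) \<Rightarrow> (real \<Rightarrow> real) \<Rightarrow> real" where
  "DF M x u lam v mu w eta = a_form M x lam v w + b_form M x u w mu + b_form M x u v eta"

end

theory Submission
  imports Defs
begin

lemma cs_int:
  fixes f :: "real \<Rightarrow> real"
  assumes f: "f integrable_on {s..s'}" and f2: "(\<lambda>t. (f t)\<^sup>2) integrable_on {s..s'}" and ss: "s \<le> s'"
  shows "(integral {s..s'} f)\<^sup>2 \<le> (s' - s) * integral {s..s'} (\<lambda>t. (f t)\<^sup>2)"
proof (cases "s = s'")
  case True then show ?thesis by simp
next
  case False
  then have L: "s' - s > 0" using ss by simp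
  define I where "I = integral {s..s'} f"
  define J where "J = integral {s..s'} (\<lambda>t. (f t)\<^sup>2)"
  define m where "m = I / (s' - s)"
  have "((\<lambda>t. (f t)\<^sup>2 - 2*m*f t + m\<^sup>2) has_integral (J - 2*m*I + m\<^sup>2*(s'-s))) {s..s'}"
  proof -
    have "((\<lambda>t. (f t)\<^sup>2) has_integral J) {s..s'}" using f2 J_def by auto
    moreover have "((\<lambda>t. 2*m*f t) has_integral 2*m*I) {s..s'}" using f I_def
      by (intro has_integral_mult_right) auto
    moreover have "((\<lambda>t. m\<^sup>2) has_integral m\<^sup>2*(s'-s)) {s..s'}"
      using has_integral_const_real[of "m\<^sup>2" s s'] ss by (simp add: mult.commute)
    ultimately show ?thesis by (intro has_integral_add has_integral_diff)
  qed
  moreover have "\<And>t. (f t)\<^sup>2 - 2*m*f t + m\<^sup>2 = (f t - m)\<^sup>2" by (simp add: power2_eq_square algebra_simps)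
  ultimately have "((\<lambda>t. (f t - m)\<^sup>2) has_integral (J - 2*m*I + m\<^sup>2*(s'-s))) {s..s'}" by simp
  then have "0 \<le> J - 2*m*I + m\<^sup>2*(s'-s)" by (rule has_integral_nonneg) auto
  also have "J - 2*m*I + m\<^sup>2*(s'-s) = J - I\<^sup>2/(s'-s)"
  proof -
    define L where "L = s' - s"
    have "L > 0" using L L_def by simp
    then have "J - 2*(I/L)*I + (I/L)\<^sup>2*L = J - I\<^sup>2/L" by (simp add: field_simps power2_eq_square)
    then show ?thesis unfolding m_def L_def .
  qed
  finally have "I\<^sup>2/(s'-s) \<le> J" by simp
  then show ?thesis using L unfolding I_def[symmetric] J_def[symmetric] by (simp add: field_simps)
qed

lemma integral_sub_le:
  fixes f :: "real \<Rightarrow> real"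
  assumes "f integrable_on {c..d}" "c \<le> s" "s \<le> s'" "s' \<le> d" "\<And>t. t \<in> {c..d} \<Longrightarrow> 0 \<le> f t"
  shows "integral {s..s'} f \<le> integral {c..d} f"
proof -
  have i1: "f integrable_on {c..s'}" "f integrable_on {s'..d}" "f integrable_on {c..s}"
    using integrable_subinterval_real[OF assms(1)] assms by auto
  have "integral {c..s'} f + integral {s'..d} f = integral {c..d} f"
    using Henstock_Kurzweil_Integration.integral_combine[OF _ _ assms(1), of s'] assms by auto
  moreover have "integral {c..s} f + integral {s..s'} f = integral {c..s'} f"
    using Henstock_Kurzweil_Integration.integral_combine[OF _ _ i1(1), of s] assms by auto
  moreover have "0 \<le> integral {s'..d} f" "0 \<le> integral {c..s} f"
    using i1 assms by (auto intro!: integral_nonneg)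
  ultimately show ?thesis by linarith
qed

lemma deriv_unique_Icc:
  fixes f :: "real \<Rightarrow> real"
  assumes "c < d" "t \<in> {c..d}" "(f has_real_derivative A) (at t within {c..d})"
    "(f has_real_derivative B) (at t within {c..d})"
  shows "A = B"
proof -
  have "vector_derivative f (at t within cbox c d) = A"
    using vector_derivative_within_cbox[of c d t f A] assms
    by (simp add: has_real_derivative_iff_has_vector_derivative)
  moreover have "vector_derivative f (at t within cbox c d) = B"
    using vector_derivative_within_cbox[of c d t f B] assms
    by (simp add: has_real_derivative_iff_has_vector_derivative)
  ultimately show ?thesis by simp
qed

definition N0 :: "real \<Rightarrow> real" where "N0 y = 1 + 4*y - 40*y^2 + 70*y^3 - 35*y^4"
definition N1 :: "real \<Rightarrow> real" where "N1 y = 6*y - 40*y^2 + 70*y^3 - 35*y^4"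
definition dN0 :: "real \<Rightarrow> real" where "dN0 y = 4 - 80*y + 210*y^2 - 140*y^3"
definition dN1 :: "real \<Rightarrow> real" where "dN1 y = 6 - 80*y + 210*y^2 - 140*y^3"
definition L0 :: "real \<Rightarrow> real" where "L0 y = (1-y)*(1-2*y)"
definition Lm :: "real \<Rightarrow> real" where "Lm y = 4*y*(1-y)"
definition L1 :: "real \<Rightarrow> real" where "L1 y = y*(2*y-1)"

lemma N_vals: "N0 0 = 1" "N0 1 = 0" "N1 0 = 0" "N1 1 = 1"
  by (simp_all add: N0_def N1_def)

lemma N0_deriv: "(N0 has_real_derivative dN0 y) (at y)"
  unfolding N0_def dN0_def by (auto intro!: derivative_eq_intros simp: algebra_simps)
lemma N1_deriv: "(N1 has_real_derivative dN1 y) (at y)"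
  unfolding N1_def dN1_def by (auto intro!: derivative_eq_intros simp: algebra_simps)

lemma affine_ftc:
  fixes H r :: "real \<Rightarrow> real"
  assumes h: "h > 0" and H: "\<And>y. (H has_real_derivative r y) (at y)"
  shows "((\<lambda>t. r ((t - x0)/h)) has_integral h * (H 1 - H 0)) {x0..x0+h}"
proof -
  have d: "((\<lambda>t. h * H ((t - x0)/h)) has_real_derivative r ((t - x0)/h)) (at t)" for t
  proof -
    have "((\<lambda>t. (t - x0)/h) has_real_derivative 1/h) (at t)"
      using h by (auto intro!: derivative_eq_intros)
    from DERIV_chain2[OF H this] have "((\<lambda>t. H ((t - x0)/h)) has_real_derivative r ((t - x0)/h) * (1/h)) (at t)" .
    from DERIV_cmult[OF this, of h] show ?thesis using assms(1) by simp
  qed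
  have "((\<lambda>t. r ((t - x0)/h)) has_integral (h * H ((x0 + h - x0)/h) - h * H ((x0 - x0)/h))) {x0..x0+h}"
  proof (rule fundamental_theorem_of_calculus)
    fix t assume "t \<in> {x0..x0+h}"
    show "((\<lambda>t. h * H ((t - x0)/h)) has_vector_derivative r ((t - x0)/h)) (at t within {x0..x0+h})"
      using has_field_derivative_at_within[OF d] by (simp add: has_real_derivative_iff_has_vector_derivative)
  qed (use h in simp)
  then show ?thesis using h by (simp add: algebra_simps)
qed

lemma qi_eq:
  assumes "x1 - x0 \<noteq> 0"
  shows "quad_interp x0 x1 F t = F x0 * L0 ((t-x0)/(x1-x0)) + F ((x0+x1)/2) * Lm ((t-x0)/(x1-x0))
           + F x1 * L1 ((t-x0)/(x1-x0))"
proof -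
  define h where "h = x1 - x0"
  have h: "h \<noteq> 0" using assms h_def by simp
  have x1: "x1 = x0 + h" using h_def by simp
  show ?thesis unfolding x1 quad_interp_def Let_def L0_def Lm_def L1_def using h
    by (simp add: field_simps)
qed

lemma simpson1:
  assumes "x0 < x1"
  shows "(quad_interp x0 x1 F has_integral (x1-x0)/6 * (F x0 + 4 * F ((x0+x1)/2) + F x1)) {x0..x1}"
proof -
  define h where "h = x1 - x0"
  have h: "h > 0" using assms h_def by simp
  define f0 where "f0 = F x0"
  define f1 where "f1 = F x1"
  define fm where "fm = F ((x0+x1)/2)"
  define H where "H y = f0*(y - 3/2*y^2 + 2/3*y^3) + fm*(2*y^2 - 4/3*y^3) + f1*(-1/2*y^2 + 2/3*y^3)" for y :: real
  have "(H has_real_derivative (f0 * L0 y + fm * Lm y + f1 * L1 y)) (at y)" for y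
    unfolding H_def L0_def Lm_def L1_def by (auto intro!: derivative_eq_intros simp: algebra_simps power2_eq_square)
  from affine_ftc[OF h this, of x0]
  have "((\<lambda>t. f0 * L0 ((t-x0)/h) + fm * Lm ((t-x0)/h) + f1 * L1 ((t-x0)/h)) has_integral h * (H 1 - H 0)) {x0..x0+h}" .
  moreover have "h * (H 1 - H 0) = (x1-x0)/6 * (F x0 + 4 * F ((x0+x1)/2) + F x1)"
    unfolding H_def h_def f0_def f1_def fm_def by (simp add: field_simps)
  moreover have "x0 + h = x1" using h_def by simp
  moreover have "quad_interp x0 x1 F = (\<lambda>t. f0 * L0 ((t-x0)/h) + fm * Lm ((t-x0)/h) + f1 * L1 ((t-x0)/h))"
    using qi_eq[of x1 x0 F] h unfolding h_def f0_def f1_def fm_def by auto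
  ultimately show ?thesis by simp
qed

lemma simpson2_aux:
  fixes l0 lm l1 gm A B :: real
  defines "H \<equiv> \<lambda>y. l0*gm*((1)*y^1 + (-3/2)*y^2 + (2/3)*y^3) + l0*A*((1)*y^1 + (1/2)*y^2 + (-50/3)*y^3 + (99/2)*y^4 + (-65)*y^5 + (245/6)*y^6 + (-10)*y^7) + l0*B*((3)*y^2 + (-58/3)*y^3 + (101/2)*y^4 + (-65)*y^5 + (245/6)*y^6 + (-10)*y^7) + lm*gm*((2)*y^2 + (-4/3)*y^3) + lm*A*((2)*y^2 + (4)*y^3 + (-44)*y^4 + (88)*y^5 + (-70)*y^6 + (20)*y^7) + lm*B*((8)*y^3 + (-46)*y^4 + (88)*y^5 + (-70)*y^6 + (20)*y^7) + l1*gm*((-1/2)*y^2 + (2/3)*y^3) + l1*A*((-1/2)*y^2 + (-2/3)*y^3 + (12)*y^4 + (-30)*y^5 + (175/6)*y^6 + (-10)*y^7) + l1*B*((-2)*y^3 + (13)*y^4 + (-30)*y^5 + (175/6)*y^6 + (-10)*y^7)"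
  shows "(H has_real_derivative ((l0 * L0 y + lm * Lm y + l1 * L1 y) * (gm + A * N0 y + B * N1 y))) (at y)"
    "H 1 - H 0 = (l0 * (gm + A) + 4 * lm * gm + l1 * (gm + B)) / 6"
proof -
  show "(H has_real_derivative ((l0 * L0 y + lm * Lm y + l1 * L1 y) * (gm + A * N0 y + B * N1 y))) (at y)"
    unfolding H_def L0_def Lm_def L1_def N0_def N1_def
    by (rule derivative_eq_intros refl | simp)+ (simp add: algebra_simps power2_eq_square power3_eq_cube power_numeral_reduce)
  show "H 1 - H 0 = (l0 * (gm + A) + 4 * lm * gm + l1 * (gm + B)) / 6"
    unfolding H_def by (simp add: algebra_simps)
qed


section \<open>H^{-1} norm facts\<close>

lemma H10_cont:
  assumes "is_H10 a b phi g"
  shows "continuous_on {a..b} phi" "g integrable_on {a..b}"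
proof -
  have gi: "g integrable_on {a..b}" using assms unfolding is_H10_def
    using set_lebesgue_integral_eq_integral(1) by blast
  show "g integrable_on {a..b}" by (rule gi)
  have "continuous_on {a..b} (\<lambda>t. integral {a..t} g)" by (rule indefinite_integral_continuous_1[OF gi])
  then show "continuous_on {a..b} phi"
    by (rule continuous_on_eq) (use assms in \<open>auto simp: is_H10_def\<close>)
qed

lemma H10_sq:
  assumes "is_H10 a b phi g"
  shows "(\<lambda>t. (phi t)\<^sup>2) integrable_on {a..b}" "(\<lambda>t. (g t)\<^sup>2) integrable_on {a..b}"
    "integral {a..b} (\<lambda>t. (phi t)\<^sup>2 + (g t)\<^sup>2) = integral {a..b} (\<lambda>t. (phi t)\<^sup>2) + integral {a..b} (\<lambda>t. (g t)\<^sup>2)"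
    "0 \<le> integral {a..b} (\<lambda>t. (phi t)\<^sup>2)" "0 \<le> integral {a..b} (\<lambda>t. (g t)\<^sup>2)"
    "(H1norm_w a b phi g)\<^sup>2 = integral {a..b} (\<lambda>t. (phi t)\<^sup>2 + (g t)\<^sup>2)"
proof -
  show p2: "(\<lambda>t. (phi t)\<^sup>2) integrable_on {a..b}"
    by (rule integrable_continuous_interval) (use H10_cont(1)[OF assms] in \<open>auto intro!: continuous_intros\<close>)
  show g2: "(\<lambda>t. (g t)\<^sup>2) integrable_on {a..b}" using assms unfolding is_H10_def by auto
  show e: "integral {a..b} (\<lambda>t. (phi t)\<^sup>2 + (g t)\<^sup>2) = integral {a..b} (\<lambda>t. (phi t)\<^sup>2) + integral {a..b} (\<lambda>t. (g t)\<^sup>2)"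
    by (rule integral_add[OF p2 g2])
  show n1: "0 \<le> integral {a..b} (\<lambda>t. (phi t)\<^sup>2)" by (rule integral_nonneg[OF p2]) auto
  show n2: "0 \<le> integral {a..b} (\<lambda>t. (g t)\<^sup>2)" by (rule integral_nonneg[OF g2]) auto
  show "(H1norm_w a b phi g)\<^sup>2 = integral {a..b} (\<lambda>t. (phi t)\<^sup>2 + (g t)\<^sup>2)"
    unfolding H1norm_w_def using e n1 n2 by simp
qed

lemma int_prod:
  assumes mu: "continuous_on {a..b} mu" and H: "is_H10 a b phi g" and t: "t > 0"
  shows "2 * \<bar>integral {a..b} (\<lambda>s. mu s * phi s)\<bar> \<le> t * integral {a..b} (\<lambda>s. (mu s)\<^sup>2) + integral {a..b} (\<lambda>s. (phi s)\<^sup>2) / t"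
proof -
  have pc: "continuous_on {a..b} phi" by (rule H10_cont(1)[OF H])
  have i1: "(\<lambda>s. 2 * (mu s * phi s)) integrable_on {a..b}" "(\<lambda>s. - (2 * (mu s * phi s))) integrable_on {a..b}"
    "(\<lambda>s. t * (mu s)\<^sup>2 + (phi s)\<^sup>2 / t) integrable_on {a..b}"
    using mu pc t by (auto intro!: integrable_continuous_interval continuous_intros)
  have i2: "(\<lambda>s. (mu s)\<^sup>2) integrable_on {a..b}" "(\<lambda>s. (phi s)\<^sup>2 / t) integrable_on {a..b}"
    using mu pc t by (auto intro!: integrable_continuous_interval continuous_intros)
  have pw: "2 * (m * p) \<le> t * m\<^sup>2 + p\<^sup>2 / t" "2 * (- (m * p)) \<le> t * m\<^sup>2 + p\<^sup>2 / t" for m p :: real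
  proof -
    have "0 \<le> (t*m - p)\<^sup>2" "0 \<le> (t*m + p)\<^sup>2" by auto
    then have "2 * (m * p) * t \<le> t * m\<^sup>2 * t + p\<^sup>2" "2 * (- (m * p)) * t \<le> t * m\<^sup>2 * t + p\<^sup>2"
      by (auto simp: power2_eq_square algebra_simps)
    then show "2 * (m * p) \<le> t * m\<^sup>2 + p\<^sup>2 / t" "2 * (- (m * p)) \<le> t * m\<^sup>2 + p\<^sup>2 / t"
      using t by (auto simp: field_simps)
  qed
  have R: "integral {a..b} (\<lambda>s. t * (mu s)\<^sup>2 + (phi s)\<^sup>2 / t) = t * integral {a..b} (\<lambda>s. (mu s)\<^sup>2) + integral {a..b} (\<lambda>s. (phi s)\<^sup>2) / t"
  proof -
    have "((\<lambda>s. t * (mu s)\<^sup>2 + (phi s)\<^sup>2 / t) has_integral t * integral {a..b} (\<lambda>s. (mu s)\<^sup>2) + integral {a..b} (\<lambda>s. (phi s)\<^sup>2) / t) {a..b}"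
      using i2 pc by (intro has_integral_add has_integral_mult_right has_integral_divide integrable_integral)
        (auto intro!: integrable_continuous_interval continuous_intros)
    then show ?thesis by (rule integral_unique)
  qed
  have "integral {a..b} (\<lambda>s. 2 * (mu s * phi s)) \<le> integral {a..b} (\<lambda>s. t * (mu s)\<^sup>2 + (phi s)\<^sup>2 / t)"
    by (rule integral_le) (use i1 pw in auto)
  moreover have "integral {a..b} (\<lambda>s. 2 * (- (mu s * phi s))) \<le> integral {a..b} (\<lambda>s. t * (mu s)\<^sup>2 + (phi s)\<^sup>2 / t)"
    by (rule integral_le) (use i1 pw in auto)
  ultimately show ?thesis using R by (simp add: abs_if)
qed

definition Hset :: "real \<Rightarrow> real \<Rightarrow> (real \<Rightarrow> real) \<Rightarrow> real set" where
  "Hset a b mu = {integral {a..b} (\<lambda>t. mu t * phi t) | phi g. is_H10 a b phi g \<and> H1norm_w a b phi g = 1}"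

lemma Hm1_Hset: "Hm1norm a b mu = Sup (Hset a b mu)"
  unfolding Hm1norm_def Hset_def ..

lemma Hset_bdd:
  assumes mu: "continuous_on {a..b} mu"
  shows "bdd_above (Hset a b mu)"
proof (rule bdd_aboveI)
  fix y assume "y \<in> Hset a b mu"
  then obtain phi g where y: "y = integral {a..b} (\<lambda>t. mu t * phi t)" and H: "is_H10 a b phi g"
    and N: "H1norm_w a b phi g = 1" unfolding Hset_def by auto
  note sq = H10_sq[OF H]
  have "integral {a..b} (\<lambda>s. (phi s)\<^sup>2) \<le> 1" using sq N by simp
  moreover have "2 * \<bar>y\<bar> \<le> 1 * integral {a..b} (\<lambda>s. (mu s)\<^sup>2) + integral {a..b} (\<lambda>s. (phi s)\<^sup>2) / 1"
    unfolding y by (rule int_prod[OF mu H]) simp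
  ultimately show "y \<le> (integral {a..b} (\<lambda>s. (mu s)\<^sup>2) + 1) / 2" by simp
qed

lemma H10_scale:
  assumes H: "is_H10 a b phi g"
  shows "is_H10 a b (\<lambda>t. c * phi t) (\<lambda>t. c * g t)" "H1norm_w a b (\<lambda>t. c * phi t) (\<lambda>t. c * g t) = \<bar>c\<bar> * H1norm_w a b phi g"
proof -
  have gi: "g integrable_on {a..b}" by (rule H10_cont(2)[OF H])
  have "(\<lambda>t. c *\<^sub>R g t) absolutely_integrable_on {a..b}"
    using H unfolding is_H10_def by (intro absolutely_integrable_scaleR_left) auto
  then have A: "(\<lambda>t. c * g t) absolutely_integrable_on {a..b}" by simp
  have B: "(\<lambda>t. (c * g t)\<^sup>2) integrable_on {a..b}"
    using integrable_on_cmult_left[OF H10_sq(2)[OF H], of "c^2"] by (simp add: power_mult_distrib)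
  have C: "c * phi t = integral {a..t} (\<lambda>t. c * g t)" if "t \<in> {a..b}" for t
    using H that unfolding is_H10_def by simp
  show "is_H10 a b (\<lambda>t. c * phi t) (\<lambda>t. c * g t)"
    unfolding is_H10_def using A B C H by (auto simp: is_H10_def)
  have "integral {a..b} (\<lambda>t. (c * phi t)\<^sup>2 + (c * g t)\<^sup>2) = c\<^sup>2 * integral {a..b} (\<lambda>t. (phi t)\<^sup>2 + (g t)\<^sup>2)"
  proof -
    have "(\<lambda>t. (c * phi t)\<^sup>2 + (c * g t)\<^sup>2) = (\<lambda>t. c\<^sup>2 * ((phi t)\<^sup>2 + (g t)\<^sup>2))"
      by (auto simp: power_mult_distrib algebra_simps)
    then show ?thesis by simp
  qed
  then show "H1norm_w a b (\<lambda>t. c * phi t) (\<lambda>t. c * g t) = \<bar>c\<bar> * H1norm_w a b phi g"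
    unfolding H1norm_w_def by (simp add: real_sqrt_mult)
qed

lemma Hm1_elem:
  assumes mu: "continuous_on {a..b} mu" and H: "is_H10 a b phi g" and N: "H1norm_w a b phi g > 0"
  shows "\<bar>integral {a..b} (\<lambda>t. mu t * phi t)\<bar> \<le> H1norm_w a b phi g * Hm1norm a b mu"
proof -
  let ?N = "H1norm_w a b phi g"
  have mem: "integral {a..b} (\<lambda>t. mu t * (c * phi t)) \<in> Hset a b mu" if c: "\<bar>c\<bar> = 1 / ?N" for c
  proof -
    have n1: "H1norm_w a b (\<lambda>t. c * phi t) (\<lambda>t. c * g t) = 1" using H10_scale(2)[OF H, of c] c N by simp
    show ?thesis unfolding Hset_def mem_Collect_eq
      apply (rule exI, rule exI, rule conjI[OF refl])
      using H10_scale(1)[OF H, of c] n1 by auto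
  qed
  have e: "integral {a..b} (\<lambda>t. mu t * (c * phi t)) = c * integral {a..b} (\<lambda>t. mu t * phi t)" for c
  proof -
    have "(\<lambda>t. mu t * (c * phi t)) = (\<lambda>t. c * (mu t * phi t))" by (auto simp: algebra_simps)
    then show ?thesis by simp
  qed
  have "1/?N * integral {a..b} (\<lambda>t. mu t * phi t) \<le> Hm1norm a b mu"
    unfolding Hm1_Hset using cSup_upper[OF mem[of "1/?N"] Hset_bdd[OF mu]] e N by simp
  moreover have "-1/?N * integral {a..b} (\<lambda>t. mu t * phi t) \<le> Hm1norm a b mu"
    unfolding Hm1_Hset using cSup_upper[OF mem[of "-1/?N"] Hset_bdd[OF mu]] e N by simp
  ultimately have "\<bar>integral {a..b} (\<lambda>t. mu t * phi t)\<bar> / ?N \<le> Hm1norm a b mu"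
    by (simp add: abs_if)
  then show ?thesis using N by (simp add: field_simps)
qed

lemma phi0_H10:
  assumes ab: "a < b"
  shows "is_H10 a b (\<lambda>t. (t - a) * (b - t)) (\<lambda>t. a + b - 2 * t)" "H1norm_w a b (\<lambda>t. (t - a) * (b - t)) (\<lambda>t. a + b - 2 * t) > 0"
proof -
  have ftc: "((\<lambda>t. a + b - 2 * t) has_integral ((y - a) * (b - y) - (a - a) * (b - a))) {a..y}" if "a \<le> y" for y
    apply (rule fundamental_theorem_of_calculus[OF that])
    by (auto intro!: derivative_eq_intros simp: has_real_derivative_iff_has_vector_derivative[symmetric] algebra_simps)
  show H: "is_H10 a b (\<lambda>t. (t - a) * (b - t)) (\<lambda>t. a + b - 2 * t)"
    unfolding is_H10_def
  proof (intro conjI ballI)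
    show "(\<lambda>t. a + b - 2 * t) absolutely_integrable_on {a..b}"
      by (rule absolutely_integrable_continuous_real) (auto intro!: continuous_intros)
    show "(\<lambda>t. (a + b - 2 * t)\<^sup>2) integrable_on {a..b}"
      by (rule integrable_continuous_interval) (auto intro!: continuous_intros)
    fix t assume "t \<in> {a..b}"
    then show "(t - a) * (b - t) = integral {a..t} (\<lambda>t. a + b - 2 * t)"
      using ftc[of t] by (auto dest: integral_unique)
  qed simp
  have dd: "((\<lambda>t. - ((a + b - 2*t)^3)/6) has_real_derivative (a + b - 2 * t)\<^sup>2) (at t)" for t
  proof -
    have "((\<lambda>t. - ((a + b - 2*t)^3)/6) has_real_derivative - (3 * (a + b - 2*t)^2 * (-2))/6) (at t)"
      by (auto intro!: derivative_eq_intros)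
    then show ?thesis by simp
  qed
  have g2: "((\<lambda>t. (a + b - 2 * t)\<^sup>2) has_integral ((- ((a + b - 2*b)^3)/6) - (- ((a + b - 2*a)^3)/6))) {a..b}"
    apply (rule fundamental_theorem_of_calculus)
    using ab apply simp
    using dd by (auto simp: has_real_derivative_iff_has_vector_derivative[symmetric] intro: has_field_derivative_at_within)
  have "(- ((a + b - 2*b)^3)/6) - (- ((a + b - 2*a)^3)/6) = (b - a)^3 / 3"
    by (simp add: power3_eq_cube field_simps)
  also have "\<dots> > 0" using ab by simp
  finally have "integral {a..b} (\<lambda>t. (a + b - 2 * t)\<^sup>2) > 0" using g2 by (simp add: integral_unique)
  then show "H1norm_w a b (\<lambda>t. (t - a) * (b - t)) (\<lambda>t. a + b - 2 * t) > 0"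
    unfolding H1norm_w_def using H10_sq(3,4)[OF H] by simp
qed

lemma Hm1_nonneg:
  assumes ab: "a < b" and mu: "continuous_on {a..b} mu"
  shows "0 \<le> Hm1norm a b mu"
proof -
  have "\<bar>integral {a..b} (\<lambda>t. mu t * ((t - a) * (b - t)))\<bar> \<le> H1norm_w a b (\<lambda>t. (t - a) * (b - t)) (\<lambda>t. a + b - 2 * t) * Hm1norm a b mu"
    by (rule Hm1_elem[OF mu phi0_H10(1)[OF ab] phi0_H10(2)[OF ab]])
  then have "0 \<le> H1norm_w a b (\<lambda>t. (t - a) * (b - t)) (\<lambda>t. a + b - 2 * t) * Hm1norm a b mu"
    by (rule order_trans[OF abs_ge_zero])
  then show ?thesis using phi0_H10(2)[OF ab] by (simp add: zero_le_mult_iff)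
qed

lemma Hm1_ge:
  assumes ab: "a < b" and mu: "continuous_on {a..b} mu" and H: "is_H10 a b phi g"
  shows "\<bar>integral {a..b} (\<lambda>t. mu t * phi t)\<bar> \<le> H1norm_w a b phi g * Hm1norm a b mu"
proof (cases "H1norm_w a b phi g > 0")
  case True then show ?thesis by (rule Hm1_elem[OF mu H])
next
  case False
  note sq = H10_sq[OF H]
  have "H1norm_w a b phi g = 0" using False sq(3,4,5) unfolding H1norm_w_def by simp
  then have "integral {a..b} (\<lambda>t. (phi t)\<^sup>2 + (g t)\<^sup>2) = 0" using sq(6) by simp
  then have z: "integral {a..b} (\<lambda>t. (phi t)\<^sup>2) = 0" using sq(3,4,5) by simp
  define X where "X = \<bar>integral {a..b} (\<lambda>t. mu t * phi t)\<bar>"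
  define Y where "Y = integral {a..b} (\<lambda>s. (mu s)\<^sup>2)"
  have Y: "Y \<ge> 0" unfolding Y_def
    by (rule integral_nonneg) (use mu in \<open>auto intro!: integrable_continuous_interval continuous_intros\<close>)
  have X: "2 * X \<le> t * Y" if "t > 0" for t
    using int_prod[OF mu H that] z unfolding X_def Y_def by simp
  have "X = 0"
  proof (rule ccontr)
    assume "X \<noteq> 0"
    then have Xp: "X > 0" unfolding X_def by simp
    have "2 * X \<le> X / (Y + 1) * Y" using X[of "X / (Y+1)"] Xp Y by simp
    also have "\<dots> < X" using Xp Y by (simp add: field_simps)
    finally show False using Xp by simp
  qed
  then show ?thesis unfolding X_def using \<open>H1norm_w a b phi g = 0\<close> by simp
qed

lemma poly2:
  fixes p :: "real poly"
  assumes "degree p \<le> 2"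
  shows "poly p t = coeff p 0 + coeff p 1 * t + coeff p 2 * t^2"
proof -
  have "poly p t = (\<Sum>i\<le>degree p. coeff p i * t ^ i)" by (rule poly_altdef)
  also have "\<dots> = (\<Sum>i\<le>2. coeff p i * t ^ i)"
    by (rule sum.mono_neutral_left) (use assms in \<open>auto simp: coeff_eq_0\<close>)
  also have "\<dots> = coeff p 0 + coeff p 1 * t + coeff p 2 * t^2"
    by (simp add: numeral_2_eq_2)
  finally show ?thesis .
qed

lemma qi_exact:
  fixes p :: "real poly"
  assumes "degree p \<le> 2" "x1 - x0 \<noteq> 0"
  shows "quad_interp x0 x1 (poly p) t = poly p t"
proof -
  define h where "h = x1 - x0"
  have h: "h \<noteq> 0" using assms h_def by simp
  define c0 c1 c2 where "c0 = coeff p 0" and "c1 = coeff p 1" and "c2 = coeff p 2"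
  have P: "\<And>t. poly p t = c0 + c1 * t + c2 * t^2" unfolding c0_def c1_def c2_def by (rule poly2[OF assms(1)])
  have id: "c0 + c1 * (x0 + h*y) + c2 * (x0 + h*y)^2 = (c0 + c1 * x0 + c2 * x0^2) * L0 y
     + (c0 + c1 * ((x0 + (x0 + h)) / 2) + c2 * ((x0 + (x0 + h)) / 2)^2) * Lm y
     + (c0 + c1 * (x0 + h) + c2 * (x0 + h)^2) * L1 y" for y
    unfolding L0_def Lm_def L1_def by (simp add: field_simps power2_eq_square)
  have x1: "x1 = x0 + h" using h_def by simp
  have t: "t = x0 + h * ((t - x0) / h)" using h by simp
  show ?thesis unfolding qi_eq[OF assms(2)] P h_def[symmetric]
    using id[of "(t - x0) / h"] unfolding x1 t[symmetric] by simp
qed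

lemma dN_bound:
  assumes "0 \<le> y" "y \<le> 1"
  shows "\<bar>dN0 y\<bar> \<le> 436" "\<bar>dN1 y\<bar> \<le> 436"
proof -
  have y2: "0 \<le> y^2" "y^2 \<le> 1" using assms by (auto intro: power_le_one)
  have y3: "0 \<le> y^3" "y^3 \<le> 1" using assms by (auto intro: power_le_one)
  show "\<bar>dN0 y\<bar> \<le> 436" "\<bar>dN1 y\<bar> \<le> 436" unfolding dN0_def dN1_def abs_le_iff
    using assms y2 y3 by (intro conjI; linarith)+
qed

lemma sq_comb:
  fixes A B u v :: real
  assumes "\<bar>u\<bar> \<le> 436" "\<bar>v\<bar> \<le> 436"
  shows "(A * u + B * v)\<^sup>2 \<le> 2 * 436\<^sup>2 * (A\<^sup>2 + B\<^sup>2)"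
proof -
  have u: "u\<^sup>2 \<le> 436\<^sup>2" "v\<^sup>2 \<le> 436\<^sup>2"
    using power_mono[OF assms(1), of 2] power_mono[OF assms(2), of 2] by simp_all
  have "(A * u + B * v)\<^sup>2 \<le> 2 * (A\<^sup>2 * u\<^sup>2) + 2 * (B\<^sup>2 * v\<^sup>2)"
  proof -
    have "0 \<le> (A * u - B * v)\<^sup>2" by simp
    then show ?thesis by (simp add: power2_eq_square algebra_simps)
  qed
  also have "\<dots> \<le> 2 * (A\<^sup>2 * 436\<^sup>2) + 2 * (B\<^sup>2 * 436\<^sup>2)"
    using mult_left_mono[OF u(1), of "A\<^sup>2"] mult_left_mono[OF u(2), of "B\<^sup>2"] by simp
  finally show ?thesis by (simp add: algebra_simps)
qed

lemma sum_sq_card: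
  fixes c :: "'d::finite \<Rightarrow> real"
  shows "(\<Sum>k\<in>UNIV. c k)\<^sup>2 \<le> real CARD('d) * (\<Sum>k\<in>UNIV. (c k)\<^sup>2)"
  using Cauchy_Schwarz_ineq_sum[of c "\<lambda>_. 1" UNIV] by (simp add: mult.commute)

lemma mult3_mono:
  fixes A B C A' B' C' :: real
  assumes "0 \<le> A" "0 \<le> B" "0 \<le> C" "A \<le> A'" "B \<le> B'" "C \<le> C'"
  shows "A * B * C \<le> A' * B' * C'"
  using assms by (meson mult_mono order_trans mult_nonneg_nonneg)

definition CC :: "real \<Rightarrow> real \<Rightarrow> nat \<Rightarrow> real" where
  "CC a b d = sqrt ((1 + (b - a)\<^sup>2) * (8 * (2 * 436\<^sup>2) * real d * (b - a)))"

locale mesh =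
  fixes a b :: real and M :: nat and x :: "nat \<Rightarrow> real"
  assumes msh: "is_mesh a b M x"
begin

lemma x0: "x 0 = a" and xM: "x M = b" and ab: "a < b" and M1: "1 \<le> M"
  using msh by (auto simp: is_mesh_def)

lemma xinc: "i \<in> {1..M} \<Longrightarrow> x (i-1) < x i"
  using msh by (auto simp: is_mesh_def)

lemma x_mono: "i \<le> j \<Longrightarrow> j \<le> M \<Longrightarrow> x i \<le> x j"
proof (induction j)
  case 0 then show ?case by simp
next
  case (Suc j)
  show ?case
  proof (cases "i = Suc j")
    case False
    then have "x i \<le> x j" using Suc by auto
    also have "x j < x (Suc j)" using xinc[of "Suc j"] Suc by auto
    finally show ?thesis by simp
  qed simp
qed

lemma x_strict: "i < j \<Longrightarrow> j \<le> M \<Longrightarrow> x i < x j"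
proof -
  assume "i < j" "j \<le> M"
  then have "x i \<le> x (j-1)" "x (j-1) < x j" using x_mono[of i "j-1"] xinc[of j] by auto
  then show ?thesis by linarith
qed

lemma x_in: "i \<le> M \<Longrightarrow> x i \<in> {a..b}"
  using x_mono[of 0 i] x_mono[of i M] x0 xM by auto

lemma elem_sub: "i \<in> {1..M} \<Longrightarrow> {x(i-1)..x i} \<subseteq> {a..b}"
  using x_in[of "i-1"] x_in[of i] by auto

lemma elem_props:
  assumes "t \<in> {a..b}"
  shows "elem M x t \<in> {1..M}" "x (elem M x t - 1) \<le> t" "t \<le> x (elem M x t)"
    "elem M x t = 1 \<or> x (elem M x t - 1) < t"
proof -
  let ?P = "\<lambda>i. 1 \<le> i \<and> i \<le> M \<and> t \<le> x i"
  have PM: "?P M" using assms M1 xM by auto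
  have P: "?P (elem M x t)" unfolding elem_def by (rule LeastI[of ?P, OF PM])
  then show "elem M x t \<in> {1..M}" "t \<le> x (elem M x t)" by auto
  have min: "elem M x t = 1 \<or> x (elem M x t - 1) < t"
  proof (cases "elem M x t = 1")
    case False
    then have "elem M x t - 1 < elem M x t" using P by auto
    then have "\<not> ?P (elem M x t - 1)" unfolding elem_def by (rule not_less_Least)
    then show ?thesis using P False by auto
  qed simp
  then show "elem M x t = 1 \<or> x (elem M x t - 1) < t" .
  show "x (elem M x t - 1) \<le> t" using min assms x0 by auto
qed

lemma elem_eq:
  assumes "i \<in> {1..M}" "x (i-1) < t" "t \<le> x i"
  shows "elem M x t = i"
  unfolding elem_def
proof (rule Least_equality)
  show "1 \<le> i \<and> i \<le> M \<and> t \<le> x i" using assms by auto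
next
  fix j assume j: "1 \<le> j \<and> j \<le> M \<and> t \<le> x j"
  show "i \<le> j"
  proof (rule ccontr)
    assume "\<not> i \<le> j"
    then have "x j \<le> x (i-1)" using x_mono[of j "i-1"] assms by auto
    then show False using j assms by auto
  qed
qed

lemma mesh_has_integral:
  fixes f :: "real \<Rightarrow> real"
  assumes "\<And>i. i \<in> {1..M} \<Longrightarrow> (f has_integral I i) {x(i-1)..x i}"
  shows "(f has_integral (\<Sum>i=1..M. I i)) {a..b}"
proof -
  have "n \<le> M \<Longrightarrow> (f has_integral (\<Sum>i=1..n. I i)) {x 0..x n}" for n
  proof (induction n)
    case 0 then show ?case using has_integral_refl(2)[of f "x 0"] by simp
  next
    case (Suc n)
    have "(f has_integral (\<Sum>i=1..n. I i) + I (Suc n)) {x 0..x (Suc n)}"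
      apply (rule has_integral_combine[of _ "x n"])
      using Suc x_mono[of 0 n] x_mono[of n "Suc n"] assms[of "Suc n"] by auto
    then show ?case by simp
  qed
  from this[of M] show ?thesis using x0 xM by simp
qed

lemma mesh_cont:
  assumes "\<And>i. i \<in> {1..M} \<Longrightarrow> continuous_on {x(i-1)..x i} f"
  shows "continuous_on {a..b} f"
proof -
  have "n \<le> M \<Longrightarrow> continuous_on {x 0..x n} f" for n
  proof (induction n)
    case 0 then show ?case by simp
  next
    case (Suc n)
    have "{x 0..x (Suc n)} = {x 0..x n} \<union> {x n..x (Suc n)}"
      using x_mono[of 0 n] x_mono[of n "Suc n"] Suc by auto
    then show ?case using continuous_on_closed_Un[of "{x 0..x n}" "{x n..x (Suc n)}" f]
      Suc assms[of "Suc n"] by auto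
  qed
  from this[of M] show ?thesis using x0 xM by simp
qed

lemma mesh_pw_integral:
  fixes f :: "real \<Rightarrow> real"
  assumes "\<And>i. i \<in> {1..M} \<Longrightarrow> continuous_on {x(i-1)..x i} (F i)"
    and "\<And>i t. i \<in> {1..M} \<Longrightarrow> x(i-1) < t \<Longrightarrow> t < x i \<Longrightarrow> f t = F i t"
  shows "(f has_integral (\<Sum>i=1..M. integral {x(i-1)..x i} (F i))) {a..b}"
proof (rule mesh_has_integral)
  fix i assume i: "i \<in> {1..M}"
  have "(F i has_integral integral {x(i-1)..x i} (F i)) {x(i-1)..x i}"
    using integrable_continuous_interval[OF assms(1)[OF i]] by auto
  then show "(f has_integral integral {x(i-1)..x i} (F i)) {x(i-1)..x i}"
    by (rule has_integral_spike_finite[of "{x(i-1), x i}", rotated 2]) (use assms(2)[OF i] in auto)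
qed

lemma mesh_pw_integral2:
  fixes f :: "real \<Rightarrow> real"
  assumes "\<And>i. i \<in> {1..M} \<Longrightarrow> continuous_on {x(i-1)..x i} (F i)"
    and "\<And>i t. i \<in> {1..M} \<Longrightarrow> x(i-1) < t \<Longrightarrow> t < x i \<Longrightarrow> f t = F i t"
  shows "(f has_integral (\<Sum>i=1..M. integral {x(i-1)..x i} f)) {a..b}"
    "\<And>i. i \<in> {1..M} \<Longrightarrow> integral {x(i-1)..x i} f = integral {x(i-1)..x i} (F i)"
proof -
  have *: "(f has_integral integral {x(i-1)..x i} (F i)) {x(i-1)..x i}" if i: "i \<in> {1..M}" for i
  proof -
    have "(F i has_integral integral {x(i-1)..x i} (F i)) {x(i-1)..x i}"
      using integrable_continuous_interval[OF assms(1)[OF i]] by auto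
    then show ?thesis
      by (rule has_integral_spike_finite[of "{x(i-1), x i}", rotated 2]) (use assms(2)[OF i] in auto)
  qed
  then show **: "\<And>i. i \<in> {1..M} \<Longrightarrow> integral {x(i-1)..x i} f = integral {x(i-1)..x i} (F i)"
    by blast
  show "(f has_integral (\<Sum>i=1..M. integral {x(i-1)..x i} f)) {a..b}"
    by (rule mesh_has_integral) (use * ** in auto)
qed

definition pp :: "nat \<Rightarrow> (real \<Rightarrow> real) \<Rightarrow> nat \<Rightarrow> real poly" where
  "pp k v i = (SOME p. degree p \<le> k \<and> (\<forall>t\<in>{x(i-1)..x i}. v t = poly p t))"

lemma pp:
  assumes "pw_poly k M x v" "i \<in> {1..M}"
  shows "degree (pp k v i) \<le> k" "\<And>t. t \<in> {x(i-1)..x i} \<Longrightarrow> v t = poly (pp k v i) t"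
proof -
  have "\<exists>p. degree p \<le> k \<and> (\<forall>t\<in>{x(i-1)..x i}. v t = poly p t)"
    using assms unfolding pw_poly_def by auto
  then have "degree (pp k v i) \<le> k \<and> (\<forall>t\<in>{x(i-1)..x i}. v t = poly (pp k v i) t)"
    unfolding pp_def by (rule someI_ex)
  then show "degree (pp k v i) \<le> k" "\<And>t. t \<in> {x(i-1)..x i} \<Longrightarrow> v t = poly (pp k v i) t" by auto
qed

lemma C1:
  assumes "spline 3 1 M x v"
  obtains D where "\<And>t. t \<in> {a..b} \<Longrightarrow> (v has_real_derivative D t) (at t within {a..b})"
    "continuous_on {a..b} D"
proof -
  from assms obtain D where "\<forall>t\<in>{a..b}. (v has_real_derivative D t) (at t within {a..b})"
    "continuous_on {a..b} D" unfolding spline_def C1_on_def x0 xM by auto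
  then show thesis using that by blast
qed

lemma Dv_D:
  assumes "\<And>t. t \<in> {a..b} \<Longrightarrow> (v has_real_derivative D t) (at t within {a..b})" "t \<in> {a..b}"
  shows "Dv a b v t = D t"
  unfolding Dv_def using assms ab
  by (metis cbox_interval has_real_derivative_iff_has_vector_derivative vector_derivative_within_cbox)

lemma Dv_cont:
  assumes "spline 3 1 M x v"
  shows "continuous_on {a..b} (Dv a b v)"
proof -
  obtain D where D: "\<And>t. t \<in> {a..b} \<Longrightarrow> (v has_real_derivative D t) (at t within {a..b})"
    "continuous_on {a..b} D" using C1[OF assms] by blast
  show ?thesis using D(2) by (rule continuous_on_cong[THEN iffD1, rotated 2]) (use Dv_D[OF D(1)] in auto)
qed

lemma Dv_elem:
  assumes "spline 3 1 M x v" "i \<in> {1..M}" "t \<in> {x(i-1)..x i}"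
  shows "Dv a b v t = poly (pderiv (pp 3 v i)) t"
proof -
  obtain D where D: "\<And>t. t \<in> {a..b} \<Longrightarrow> (v has_real_derivative D t) (at t within {a..b})"
    "continuous_on {a..b} D" using C1[OF assms(1)] by blast
  have pw: "pw_poly 3 M x v" using assms(1) unfolding spline_def by auto
  let ?P = "pp 3 v i"
  have tab: "t \<in> {a..b}" using elem_sub[OF assms(2)] assms(3) by auto
  have "(v has_real_derivative D t) (at t within {x(i-1)..x i})"
    using D(1)[OF tab] elem_sub[OF assms(2)] by (rule DERIV_subset)
  then have 1: "(poly ?P has_real_derivative D t) (at t within {x(i-1)..x i})"
    by (rule has_field_derivative_transform_within[where d=1]) (use assms(3) pp(2)[OF pw assms(2)] in auto)
  have 2: "(poly ?P has_real_derivative poly (pderiv ?P) t) (at t within {x(i-1)..x i})"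
    by (rule has_field_derivative_at_within) (rule poly_DERIV)
  have "D t = poly (pderiv ?P) t"
    by (rule deriv_unique_Icc[OF xinc[OF assms(2)] assms(3) 1 2])
  then show ?thesis using Dv_D[OF D(1) tab] by simp
qed

lemma Dv2_elem:
  assumes "spline 3 1 M x v" "i \<in> {1..M}" "x(i-1) < t" "t < x i"
  shows "(Dv a b v has_real_derivative poly (pderiv (pderiv (pp 3 v i))) t) (at t)"
    "Dv a b (Dv a b v) t = poly (pderiv (pderiv (pp 3 v i))) t"
proof -
  let ?P = "pp 3 v i"
  show 1: "(Dv a b v has_real_derivative poly (pderiv (pderiv ?P)) t) (at t)"
  proof (rule has_field_derivative_transform_within_open[OF poly_DERIV, where S="{x(i-1)<..<x i}"])
    fix y assume "y \<in> {x(i-1)<..<x i}"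
    then show "poly (pderiv ?P) y = Dv a b v y" using Dv_elem[OF assms(1,2), of y] by simp
  qed (use assms in auto)
  have tab: "t \<in> {a..b}" using elem_sub[OF assms(2)] assms(3,4) by auto
  have "(Dv a b v has_vector_derivative poly (pderiv (pderiv ?P)) t) (at t within cbox a b)"
    using has_field_derivative_at_within[OF 1] by (simp add: has_real_derivative_iff_has_vector_derivative cbox_interval)
  from vector_derivative_within_cbox[OF ab _ this] tab
  show "Dv a b (Dv a b v) t = poly (pderiv (pderiv ?P)) t"
    unfolding Dv_def by (simp add: cbox_interval)
qed

lemma Dv_ftc:
  assumes "spline 3 1 M x v" "a \<le> s" "s \<le> s'" "s' \<le> b"
  shows "(Dv a b (Dv a b v) has_integral (Dv a b v s' - Dv a b v s)) {s..s'}"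
proof (rule fundamental_theorem_of_calculus_interior_strong[of "x ` {0..M}"])
  show "continuous_on {s..s'} (Dv a b v)"
    using Dv_cont[OF assms(1)] by (rule continuous_on_subset) (use assms in auto)
next
  fix y assume y: "y \<in> {s<..<s'} - x ` {0..M}"
  then have yab: "y \<in> {a..b}" using assms by auto
  define i where "i = elem M x y"
  note e = elem_props[OF yab, folded i_def]
  have "x (i-1) \<noteq> y" "x i \<noteq> y" using y e(1) by auto
  then have "x(i-1) < y" "y < x i" using e by auto
  then show "(Dv a b v has_vector_derivative Dv a b (Dv a b v) y) (at y)"
    using Dv2_elem[OF assms(1) e(1)] by (simp add: has_real_derivative_iff_has_vector_derivative)
qed (use assms in auto)

lemma Dv2_sq_integral:
  assumes "spline 3 1 M x v"
  shows "((\<lambda>t. (Dv a b (Dv a b v) t)\<^sup>2) has_integral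
           (\<Sum>i=1..M. integral {x(i-1)..x i} (\<lambda>t. (Dv a b (Dv a b v) t)\<^sup>2))) {a..b}"
  by (rule mesh_pw_integral2(1)[of "\<lambda>i t. (poly (pderiv (pderiv (pp 3 v i))) t)\<^sup>2"])
     (auto intro!: continuous_intros simp: Dv2_elem[OF assms])

lemma Dv2_sq_int:
  assumes "spline 3 1 M x v"
  shows "(\<lambda>t. (Dv a b (Dv a b v) t)\<^sup>2) integrable_on {a..b}"
  using Dv2_sq_integral[OF assms] by blast

lemma Dv_diff_sq:
  assumes "spline 3 1 M x v" "i \<in> {1..M}" "s \<in> {x(i-1)..x i}" "s' \<in> {x(i-1)..x i}"
  shows "(Dv a b v s' - Dv a b v s)\<^sup>2 \<le> (x i - x (i-1)) * integral {x(i-1)..x i} (\<lambda>t. (Dv a b (Dv a b v) t)\<^sup>2)"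
proof -
  have gen: "(Dv a b v r' - Dv a b v r)\<^sup>2 \<le> (x i - x (i-1)) * integral {x(i-1)..x i} (\<lambda>t. (Dv a b (Dv a b v) t)\<^sup>2)"
    if r: "r \<in> {x(i-1)..x i}" "r' \<in> {x(i-1)..x i}" "r \<le> r'" for r r'
  proof -
    have sub: "{x(i-1)..x i} \<subseteq> {a..b}" by (rule elem_sub[OF assms(2)])
    have ftc: "(Dv a b (Dv a b v) has_integral (Dv a b v r' - Dv a b v r)) {r..r'}"
      using r sub by (intro Dv_ftc[OF assms(1)]) auto
    have i2: "(\<lambda>t. (Dv a b (Dv a b v) t)\<^sup>2) integrable_on {x(i-1)..x i}"
      using integrable_subinterval_real[OF Dv2_sq_int[OF assms(1)] sub] .
    have "(Dv a b v r' - Dv a b v r)\<^sup>2 = (integral {r..r'} (Dv a b (Dv a b v)))\<^sup>2"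
      using ftc by (simp add: integral_unique)
    also have "\<dots> \<le> (r' - r) * integral {r..r'} (\<lambda>t. (Dv a b (Dv a b v) t)\<^sup>2)"
      by (rule cs_int) (use ftc integrable_subinterval_real[OF i2, of r r'] r in auto)
    also have "\<dots> \<le> (x i - x (i-1)) * integral {x(i-1)..x i} (\<lambda>t. (Dv a b (Dv a b v) t)\<^sup>2)"
    proof (rule mult_mono)
      show "integral {r..r'} (\<lambda>t. (Dv a b (Dv a b v) t)\<^sup>2) \<le> integral {x(i-1)..x i} (\<lambda>t. (Dv a b (Dv a b v) t)\<^sup>2)"
        by (rule integral_sub_le[OF i2]) (use r in auto)
      show "0 \<le> integral {r..r'} (\<lambda>t. (Dv a b (Dv a b v) t)\<^sup>2)"
        by (rule integral_nonneg[OF integrable_subinterval_real[OF i2]]) (use r in auto)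
    qed (use r in auto)
    finally show ?thesis .
  qed
  show ?thesis
  proof (cases "s \<le> s'")
    case True then show ?thesis using gen assms by auto
  next
    case False then show ?thesis using gen[of s' s] assms by (simp add: power2_commute)
  qed
qed

lemma Dv_sq_bound:
  assumes "spline 3 1 M x v" "Dv a b v a = 0" "s \<in> {a..b}"
  shows "(Dv a b v s)\<^sup>2 \<le> (b - a) * integral {a..b} (\<lambda>t. (Dv a b (Dv a b v) t)\<^sup>2)"
proof -
  have ftc: "(Dv a b (Dv a b v) has_integral (Dv a b v s - Dv a b v a)) {a..s}"
    using assms by (intro Dv_ftc[OF assms(1)]) auto
  have i2: "(\<lambda>t. (Dv a b (Dv a b v) t)\<^sup>2) integrable_on {a..b}" by (rule Dv2_sq_int[OF assms(1)])
  have "(Dv a b v s)\<^sup>2 = (integral {a..s} (Dv a b (Dv a b v)))\<^sup>2"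
    using ftc assms(2) by (simp add: integral_unique)
  also have "\<dots> \<le> (s - a) * integral {a..s} (\<lambda>t. (Dv a b (Dv a b v) t)\<^sup>2)"
    by (rule cs_int) (use ftc integrable_subinterval_real[OF i2, of a s] assms in auto)
  also have "\<dots> \<le> (b - a) * integral {a..b} (\<lambda>t. (Dv a b (Dv a b v) t)\<^sup>2)"
  proof (rule mult_mono)
    show "integral {a..s} (\<lambda>t. (Dv a b (Dv a b v) t)\<^sup>2) \<le> integral {a..b} (\<lambda>t. (Dv a b (Dv a b v) t)\<^sup>2)"
      by (rule integral_sub_le[OF i2]) (use assms in auto)
    show "0 \<le> integral {a..s} (\<lambda>t. (Dv a b (Dv a b v) t)\<^sup>2)"
      by (rule integral_nonneg[OF integrable_subinterval_real[OF i2]]) (use assms in auto)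
  qed (use assms in auto)
  finally show ?thesis .
qed


definition hh :: "nat \<Rightarrow> real" where "hh i = x i - x (i-1)"
definition mid :: "nat \<Rightarrow> real" where "mid i = (x (i-1) + x i) / 2"
definition Phi :: "(real \<Rightarrow> real) \<Rightarrow> nat \<Rightarrow> real \<Rightarrow> real" where
  "Phi g i t = g (mid i) + (g (x(i-1)) - g (mid i)) * N0 ((t - x(i-1)) / hh i)
      + (g (x i) - g (mid i)) * N1 ((t - x(i-1)) / hh i)"
definition dPhi :: "(real \<Rightarrow> real) \<Rightarrow> nat \<Rightarrow> real \<Rightarrow> real" where
  "dPhi g i t = ((g (x(i-1)) - g (mid i)) * dN0 ((t - x(i-1)) / hh i)
      + (g (x i) - g (mid i)) * dN1 ((t - x(i-1)) / hh i)) / hh i"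
definition phi :: "(real \<Rightarrow> real) \<Rightarrow> real \<Rightarrow> real" where "phi g t = Phi g (elem M x t) t"
definition dphi :: "(real \<Rightarrow> real) \<Rightarrow> real \<Rightarrow> real" where "dphi g t = dPhi g (elem M x t) t"
definition ssum :: "(real \<Rightarrow> real) \<Rightarrow> real" where
  "ssum F = (\<Sum>i=1..M. hh i / 6 * (F (x(i-1)) + 4 * F (mid i) + F (x i)))"

lemma hh_pos: "i \<in> {1..M} \<Longrightarrow> hh i > 0"
  using xinc unfolding hh_def by force

lemma Phi_left: "i \<in> {1..M} \<Longrightarrow> Phi g i (x(i-1)) = g (x(i-1))"
  unfolding Phi_def by (simp add: N_vals)

lemma Phi_right: "i \<in> {1..M} \<Longrightarrow> Phi g i (x i) = g (x i)"
proof -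
  assume i: "i \<in> {1..M}"
  have "(x i - x(i-1)) / hh i = 1" using hh_pos[OF i] unfolding hh_def by simp
  then show ?thesis unfolding Phi_def by (simp add: N_vals)
qed

lemma phi_elem:
  assumes i: "i \<in> {1..M}" and t: "t \<in> {x(i-1)..x i}"
  shows "phi g t = Phi g i t"
proof (cases "x(i-1) < t")
  case True then show ?thesis unfolding phi_def using elem_eq[OF i] t by simp
next
  case False
  then have t': "t = x(i-1)" using t by simp
  show ?thesis
  proof (cases "i = 1")
    case True
    have ta: "t = a" using t' True x0 by simp
    then have tab: "t \<in> {a..b}" using ab by simp
    define e where "e = elem M x t"
    note ep = elem_props[OF tab, folded e_def]
    have "e = 1"
    proof (rule ccontr)
      assume "e \<noteq> 1"
      then have "x 0 < x (e-1)" using ep(1) by (intro x_strict) auto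
      then show False using ep(2) ta x0 by simp
    qed
    then show ?thesis unfolding phi_def e_def[symmetric] using True by simp
  next
    case False
    then have i1: "i - 1 \<in> {1..M}" using i by auto
    have "x (i-1-1) < x (i-1)" using xinc[OF i1] .
    then have "elem M x t = i - 1" using elem_eq[OF i1, of t] t' by simp
    then have "phi g t = Phi g (i-1) (x (i-1))" unfolding phi_def t' by simp
    also have "\<dots> = g (x (i-1))" using Phi_right[OF i1] .
    also have "\<dots> = Phi g i t" using Phi_left[OF i] t' by simp
    finally show ?thesis .
  qed
qed

lemma Phi_cont: assumes "i \<in> {1..M}" shows "continuous_on S (Phi g i)"
  unfolding Phi_def N0_def N1_def using hh_pos[OF assms] by (auto intro!: continuous_intros)

lemma dPhi_cont: assumes "i \<in> {1..M}" shows "continuous_on S (dPhi g i)"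
  unfolding dPhi_def dN0_def dN1_def using hh_pos[OF assms] by (auto intro!: continuous_intros)

lemma phi_cont: "continuous_on {a..b} (phi g)"
proof (rule mesh_cont)
  fix i assume i: "i \<in> {1..M}"
  show "continuous_on {x (i - 1)..x i} (phi g)"
    by (rule continuous_on_eq[OF Phi_cont[OF i]]) (use phi_elem[OF i] in auto)
qed

lemma Phi_deriv:
  assumes i: "i \<in> {1..M}"
  shows "(Phi g i has_real_derivative dPhi g i t) (at t)"
proof -
  have h: "hh i > 0" by (rule hh_pos[OF i])
  have af: "((\<lambda>t. (t - x(i-1)) / hh i) has_real_derivative 1 / hh i) (at t)"
    using h by (auto intro!: derivative_eq_intros)
  have d0: "((\<lambda>t. N0 ((t - x(i-1)) / hh i)) has_real_derivative dN0 ((t - x(i-1)) / hh i) * (1 / hh i)) (at t)"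
    by (rule DERIV_chain2[OF N0_deriv af])
  have d1: "((\<lambda>t. N1 ((t - x(i-1)) / hh i)) has_real_derivative dN1 ((t - x(i-1)) / hh i) * (1 / hh i)) (at t)"
    by (rule DERIV_chain2[OF N1_deriv af])
  have "((\<lambda>t. g (mid i) + (g (x(i-1)) - g (mid i)) * N0 ((t - x(i-1)) / hh i)
      + (g (x i) - g (mid i)) * N1 ((t - x(i-1)) / hh i)) has_real_derivative
      0 + (g (x(i-1)) - g (mid i)) * (dN0 ((t - x(i-1)) / hh i) * (1 / hh i))
      + (g (x i) - g (mid i)) * (dN1 ((t - x(i-1)) / hh i) * (1 / hh i))) (at t)"
    by (intro DERIV_add DERIV_const DERIV_cmult d0 d1)
  moreover have "0 + (g (x(i-1)) - g (mid i)) * (dN0 ((t - x(i-1)) / hh i) * (1 / hh i))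
      + (g (x i) - g (mid i)) * (dN1 ((t - x(i-1)) / hh i) * (1 / hh i)) = dPhi g i t"
    unfolding dPhi_def using h by (simp add: field_simps)
  ultimately show ?thesis unfolding Phi_def[abs_def] by simp
qed

lemma phi_deriv:
  assumes i: "i \<in> {1..M}" and t: "x(i-1) < t" "t < x i"
  shows "(phi g has_real_derivative dPhi g i t) (at t)" "dphi g t = dPhi g i t"
proof -
  show "(phi g has_real_derivative dPhi g i t) (at t)"
    by (rule has_field_derivative_transform_within_open[OF Phi_deriv[OF i], where S="{x(i-1)<..<x i}"])
       (use t phi_elem[OF i] in auto)
  show "dphi g t = dPhi g i t" unfolding dphi_def using elem_eq[OF i] t by simp
qed

lemma phi_a: "phi g a = g a"
  using phi_elem[of 1 "x 0" g] Phi_left[of 1 g] M1 x0 x_mono[of 0 1] by auto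

lemma phi_b: "phi g b = g b"
  using phi_elem[of M "x M" g] Phi_right[of M g] M1 xM x_mono[of "M-1" M] by auto

lemma phi_ftc:
  assumes "t \<in> {a..b}"
  shows "(dphi g has_integral (phi g t - phi g a)) {a..t}"
proof (rule fundamental_theorem_of_calculus_interior_strong[of "x ` {0..M}"])
  show "continuous_on {a..t} (phi g)"
    using phi_cont by (rule continuous_on_subset) (use assms in auto)
next
  fix y assume y: "y \<in> {a<..<t} - x ` {0..M}"
  then have yab: "y \<in> {a..b}" using assms by auto
  define i where "i = elem M x y"
  note e = elem_props[OF yab, folded i_def]
  have "x (i-1) \<noteq> y" "x i \<noteq> y" using y e(1) by auto
  then have "x(i-1) < y" "y < x i" using e by auto
  then show "(phi g has_vector_derivative dphi g y) (at y)"
    using phi_deriv[OF e(1)] by (simp add: has_real_derivative_iff_has_vector_derivative)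
qed (use assms in auto)

lemma dphi_sq_integral:
  shows "((\<lambda>t. (dphi g t)\<^sup>2) has_integral (\<Sum>i=1..M. integral {x(i-1)..x i} (\<lambda>t. (dphi g t)\<^sup>2))) {a..b}"
    "\<And>i. i \<in> {1..M} \<Longrightarrow> integral {x(i-1)..x i} (\<lambda>t. (dphi g t)\<^sup>2) = integral {x(i-1)..x i} (\<lambda>t. (dPhi g i t)\<^sup>2)"
  by (rule mesh_pw_integral2[of "\<lambda>i t. (dPhi g i t)\<^sup>2"];
      auto intro!: continuous_intros dPhi_cont simp: phi_deriv)+

lemma phi_H10:
  assumes "g a = 0" "g b = 0"
  shows "is_H10 a b (phi g) (dphi g)"
  unfolding is_H10_def
proof (intro conjI ballI)
  have i2: "(\<lambda>t. (dphi g t)\<^sup>2) integrable_on {a..b}" using dphi_sq_integral(1) by blast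
  then show "(\<lambda>t. (dphi g t)\<^sup>2) integrable_on {a..b}" .
  have "(dphi g has_integral (phi g b - phi g a)) {a..b}" using phi_ftc[of b g] ab by auto
  then have i1: "dphi g integrable_on {a..b}" by blast
  show "dphi g absolutely_integrable_on {a..b}"
  proof (rule absolutely_integrable_integrable_bound[OF _ i1])
    show "(\<lambda>t. (dphi g t)\<^sup>2 + 1) integrable_on {a..b}"
      using i2 by (intro integrable_add) auto
    fix t :: real
    have "\<bar>y\<bar> \<le> y\<^sup>2 + 1" for y :: real
    proof (cases "\<bar>y\<bar> \<le> 1")
      case True then show ?thesis by (simp add: add_increasing)
    next
      case False
      then have "\<bar>y\<bar> * 1 \<le> \<bar>y\<bar> * \<bar>y\<bar>" by (intro mult_left_mono) auto
      then show ?thesis by (simp add: power2_eq_square)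
    qed
    then show "norm (dphi g t) \<le> (dphi g t)\<^sup>2 + 1" by simp
  qed
  fix t assume t: "t \<in> {a..b}"
  have "(dphi g has_integral (phi g t - phi g a)) {a..t}" by (rule phi_ftc[OF t])
  moreover have "phi g a = 0" using phi_a[of g] assms(1) by simp
  ultimately show "phi g t = integral {a..t} (dphi g)" by (simp add: integral_unique)
next
  show "phi g b = 0" using phi_b assms(2) by simp
qed

lemma dip_ssum: "dip M x f1 f2 = ssum (\<lambda>t. f1 t * f2 t)"
proof -
  let ?F = "\<lambda>t. f1 t * f2 t"
  have "(interp2 M x ?F has_integral ssum ?F) {a..b}"
    unfolding ssum_def
  proof (rule mesh_has_integral)
    fix i assume i: "i \<in> {1..M}"
    have "(quad_interp (x(i-1)) (x i) ?F has_integral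
        (x i - x (i-1)) / 6 * (?F (x(i-1)) + 4 * ?F ((x(i-1) + x i)/2) + ?F (x i))) {x(i-1)..x i}"
      by (rule simpson1[OF xinc[OF i]])
    then show "(interp2 M x ?F has_integral hh i / 6 * (?F (x(i-1)) + 4 * ?F (mid i) + ?F (x i))) {x(i-1)..x i}"
      unfolding hh_def mid_def
      by (rule has_integral_spike_finite[of "{x(i-1)}", rotated 2])
         (auto simp: interp2_def Let_def elem_eq[OF i])
  qed
  then show ?thesis unfolding dip_def x0 xM by (simp add: integral_unique)
qed

lemma lam_elem:
  assumes lam: "spline 2 0 M x lam" and i: "i \<in> {1..M}" and t: "t \<in> {x(i-1)..x i}"
  shows "lam t = lam (x(i-1)) * L0 ((t - x(i-1)) / hh i) + lam (mid i) * Lm ((t - x(i-1)) / hh i)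
      + lam (x i) * L1 ((t - x(i-1)) / hh i)"
proof -
  have pw: "pw_poly 2 M x lam" using lam unfolding spline_def by auto
  note P = pp[OF pw i]
  have h: "x i - x(i-1) \<noteq> 0" using xinc[OF i] by simp
  have m: "mid i \<in> {x(i-1)..x i}" using xinc[OF i] unfolding mid_def by auto
  have "lam t = quad_interp (x(i-1)) (x i) (poly (pp 2 lam i)) t"
    using qi_exact[OF P(1) h] P(2)[OF t] by simp
  also have "\<dots> = lam (x(i-1)) * L0 ((t - x(i-1)) / hh i) + lam (mid i) * Lm ((t - x(i-1)) / hh i)
      + lam (x i) * L1 ((t - x(i-1)) / hh i)"
    unfolding qi_eq[OF h] hh_def mid_def[symmetric]
    using P(2)[of "x(i-1)"] P(2)[of "x i"] P(2)[OF m] xinc[OF i] by simp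
  finally show ?thesis .
qed

lemma phi_simpson:
  assumes lam: "spline 2 0 M x lam"
  shows "((\<lambda>t. lam t * phi g t) has_integral ssum (\<lambda>t. lam t * g t)) {a..b}"
  unfolding ssum_def
proof (rule mesh_has_integral)
  fix i assume i: "i \<in> {1..M}"
  define l0 lm l1 gm A B where "l0 = lam (x(i-1))" and "lm = lam (mid i)" and "l1 = lam (x i)"
    and "gm = g (mid i)" and "A = g (x(i-1)) - g (mid i)" and "B = g (x i) - g (mid i)"
  note S = simpson2_aux[of l0 gm A B lm l1]
  have h: "hh i > 0" by (rule hh_pos[OF i])
  from affine_ftc[OF h S(1), of "x(i-1)"]
  have I0: "((\<lambda>t. (l0 * L0 ((t - x(i-1)) / hh i) + lm * Lm ((t - x(i-1)) / hh i) + l1 * L1 ((t - x(i-1)) / hh i))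
        * (gm + A * N0 ((t - x(i-1)) / hh i) + B * N1 ((t - x(i-1)) / hh i)))
      has_integral hh i * ((l0 * (gm + A) + 4 * lm * gm + l1 * (gm + B)) / 6)) {x(i-1)..x(i-1) + hh i}"
    unfolding S(2) .
  have xh: "x(i-1) + hh i = x i" unfolding hh_def by simp
  have E: "hh i * ((l0 * (gm + A) + 4 * lm * gm + l1 * (gm + B)) / 6)
      = hh i / 6 * (lam (x(i-1)) * g (x(i-1)) + 4 * (lam (mid i) * g (mid i)) + lam (x i) * g (x i))"
    unfolding l0_def lm_def l1_def gm_def A_def B_def by (simp add: algebra_simps)
  have I: "((\<lambda>t. (l0 * L0 ((t - x(i-1)) / hh i) + lm * Lm ((t - x(i-1)) / hh i) + l1 * L1 ((t - x(i-1)) / hh i))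
        * (gm + A * N0 ((t - x(i-1)) / hh i) + B * N1 ((t - x(i-1)) / hh i)))
      has_integral hh i / 6 * (lam (x(i-1)) * g (x(i-1)) + 4 * (lam (mid i) * g (mid i)) + lam (x i) * g (x i))) {x(i-1)..x i}"
    using I0 unfolding E xh .
  show "((\<lambda>t. lam t * phi g t) has_integral hh i / 6 * (lam (x(i-1)) * g (x(i-1)) + 4 * (lam (mid i) * g (mid i)) + lam (x i) * g (x i))) {x(i-1)..x i}"
  proof (rule has_integral_spike_finite[OF _ _ I, of "{}"])
    fix t assume "t \<in> {x(i-1)..x i} - {}"
    then have t: "t \<in> {x(i-1)..x i}" by simp
    show "lam t * phi g t = (l0 * L0 ((t - x(i-1)) / hh i) + lm * Lm ((t - x(i-1)) / hh i) + l1 * L1 ((t - x(i-1)) / hh i))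
        * (gm + A * N0 ((t - x(i-1)) / hh i) + B * N1 ((t - x(i-1)) / hh i))"
      unfolding lam_elem[OF lam i t] phi_elem[OF i t] Phi_def l0_def lm_def l1_def gm_def A_def B_def ..
  qed simp
qed


definition K0 :: real where "K0 = 2 * 436\<^sup>2"

lemma dphi_elem_bound:
  assumes i: "i \<in> {1..M}"
  shows "integral {x(i-1)..x i} (\<lambda>t. (dphi g t)\<^sup>2)
     \<le> K0 * ((g (x(i-1)) - g (mid i))\<^sup>2 + (g (x i) - g (mid i))\<^sup>2) / hh i"
proof -
  define A where "A = g (x(i-1)) - g (mid i)"
  define B where "B = g (x i) - g (mid i)"
  have h: "hh i > 0" by (rule hh_pos[OF i])
  have "integral {x(i-1)..x i} (\<lambda>t. (dphi g t)\<^sup>2) = integral {x(i-1)..x i} (\<lambda>t. (dPhi g i t)\<^sup>2)"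
    by (rule dphi_sq_integral(2)[OF i])
  also have "\<dots> \<le> integral {x(i-1)..x i} (\<lambda>t. K0 * (A\<^sup>2 + B\<^sup>2) / (hh i)\<^sup>2)"
  proof (rule integral_le)
    show "(\<lambda>t. (dPhi g i t)\<^sup>2) integrable_on {x (i - 1)..x i}"
      by (rule integrable_continuous_interval) (auto intro!: continuous_intros dPhi_cont[OF i])
    fix t assume t: "t \<in> {x(i-1)..x i}"
    define y where "y = (t - x(i-1)) / hh i"
    have y: "0 \<le> y" "y \<le> 1" using t h unfolding y_def hh_def by auto
    have "(dPhi g i t)\<^sup>2 = (A * dN0 y + B * dN1 y)\<^sup>2 / (hh i)\<^sup>2"
      unfolding dPhi_def A_def B_def y_def by (simp add: power_divide)
    also have "\<dots> \<le> K0 * (A\<^sup>2 + B\<^sup>2) / (hh i)\<^sup>2"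
      unfolding K0_def by (rule divide_right_mono[OF sq_comb[OF dN_bound[OF y]]]) simp
    finally show "(dPhi g i t)\<^sup>2 \<le> K0 * (A\<^sup>2 + B\<^sup>2) / (hh i)\<^sup>2" .
  qed (rule integrable_const_ivl)
  also have "\<dots> = hh i * (K0 * (A\<^sup>2 + B\<^sup>2) / (hh i)\<^sup>2)"
    using h unfolding hh_def by simp
  also have "\<dots> = K0 * (A\<^sup>2 + B\<^sup>2) / hh i"
    using h by (simp add: power2_eq_square)
  finally show ?thesis unfolding A_def B_def .
qed

definition EE :: "(real \<Rightarrow> real) \<Rightarrow> nat \<Rightarrow> real" where
  "EE v i = integral {x(i-1)..x i} (\<lambda>t. (Dv a b (Dv a b v) t)\<^sup>2)"
definition PP :: "(real \<Rightarrow> real) \<Rightarrow> real" where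
  "PP v = integral {a..b} (\<lambda>t. (Dv a b (Dv a b v) t)\<^sup>2)"
definition GG :: "('d::finite \<Rightarrow> real \<Rightarrow> real) \<Rightarrow> ('d \<Rightarrow> real \<Rightarrow> real) \<Rightarrow> real \<Rightarrow> real" where
  "GG p q t = (\<Sum>k\<in>UNIV. Dv a b (p k) t * Dv a b (q k) t)"
definition SD :: "(real \<Rightarrow> real) \<Rightarrow> bool" where
  "SD v \<longleftrightarrow> spline 3 1 M x v \<and> Dv a b v a = 0 \<and> Dv a b v b = 0"

lemma EE_nonneg: "spline 3 1 M x v \<Longrightarrow> i \<in> {1..M} \<Longrightarrow> 0 \<le> EE v i"
  unfolding EE_def by (rule integral_nonneg[OF integrable_subinterval_real[OF Dv2_sq_int elem_sub]]) auto

lemma PP_nonneg: "spline 3 1 M x v \<Longrightarrow> 0 \<le> PP v"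
  unfolding PP_def by (rule integral_nonneg[OF Dv2_sq_int]) auto

lemma PP_sum: "spline 3 1 M x v \<Longrightarrow> PP v = (\<Sum>i=1..M. EE v i)"
  unfolding PP_def EE_def using Dv2_sq_integral by (simp add: integral_unique)

lemma GG_diff:
  fixes p q :: "'d::finite \<Rightarrow> real \<Rightarrow> real"
  assumes p: "\<And>k. SD (p k)" and q: "\<And>k. SD (q k)" and i: "i \<in> {1..M}"
    and s: "s \<in> {x(i-1)..x i}" and s': "s' \<in> {x(i-1)..x i}"
  shows "(GG p q s - GG p q s')\<^sup>2 \<le> 2 * real CARD('d) * hh i * (b - a) *
     ((\<Sum>k\<in>UNIV. EE (p k) i) * (\<Sum>k\<in>UNIV. PP (q k)) + (\<Sum>k\<in>UNIV. PP (p k)) * (\<Sum>k\<in>UNIV. EE (q k) i))"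
proof -
  have sp: "spline 3 1 M x (p k)" "spline 3 1 M x (q k)" "Dv a b (p k) a = 0" "Dv a b (q k) a = 0" for k
    using p[of k] q[of k] unfolding SD_def by auto
  have sab: "s \<in> {a..b}" "s' \<in> {a..b}" using elem_sub[OF i] s s' by auto
  define X where "X k = (Dv a b (p k) s - Dv a b (p k) s') * Dv a b (q k) s" for k
  define Y where "Y k = Dv a b (p k) s' * (Dv a b (q k) s - Dv a b (q k) s')" for k
  define Ps where "Ps = (\<Sum>k\<in>UNIV. PP (p k))"
  define Qs where "Qs = (\<Sum>k\<in>UNIV. PP (q k))"
  have Ps: "PP (p k) \<le> Ps" "0 \<le> Ps" for k unfolding Ps_def
    using sp PP_nonneg by (auto intro!: member_le_sum sum_nonneg)
  have Qs: "PP (q k) \<le> Qs" "0 \<le> Qs" for k unfolding Qs_def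
    using sp PP_nonneg by (auto intro!: member_le_sum sum_nonneg)
  have h: "hh i > 0" by (rule hh_pos[OF i])
  have ba: "b - a > 0" using ab by simp
  have "GG p q s - GG p q s' = (\<Sum>k\<in>UNIV. X k + Y k)"
    unfolding GG_def X_def Y_def by (simp add: sum_subtractf[symmetric] algebra_simps)
  then have "(GG p q s - GG p q s')\<^sup>2 \<le> real CARD('d) * (\<Sum>k\<in>UNIV. (X k + Y k)\<^sup>2)"
    using sum_sq_card by simp
  also have "\<dots> \<le> real CARD('d) * (\<Sum>k\<in>UNIV. 2 * (hh i * EE (p k) i * ((b - a) * Qs)) + 2 * (((b - a) * Ps) * (hh i * EE (q k) i)))"
  proof (rule mult_left_mono[OF sum_mono])
    fix k
    have X: "(X k)\<^sup>2 \<le> hh i * EE (p k) i * ((b - a) * Qs)"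
    proof -
      have "(X k)\<^sup>2 = (Dv a b (p k) s - Dv a b (p k) s')\<^sup>2 * (Dv a b (q k) s)\<^sup>2"
        unfolding X_def by (simp add: power_mult_distrib)
      also have "\<dots> \<le> (hh i * EE (p k) i) * ((b - a) * PP (q k))"
      proof (rule mult_mono)
        show "(Dv a b (p k) s - Dv a b (p k) s')\<^sup>2 \<le> hh i * EE (p k) i"
          unfolding hh_def EE_def by (rule Dv_diff_sq[OF sp(1) i s' s])
        show "(Dv a b (q k) s)\<^sup>2 \<le> (b - a) * PP (q k)"
          unfolding PP_def by (rule Dv_sq_bound[OF sp(2) sp(4) sab(1)])
        show "0 \<le> hh i * EE (p k) i" using h EE_nonneg[OF sp(1) i] by simp
      qed simp
      also have "\<dots> \<le> hh i * EE (p k) i * ((b - a) * Qs)"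
        using h ba EE_nonneg[OF sp(1) i] Qs(1)[of k] by (intro mult_left_mono) auto
      finally show ?thesis .
    qed
    have Y: "(Y k)\<^sup>2 \<le> ((b - a) * Ps) * (hh i * EE (q k) i)"
    proof -
      have "(Y k)\<^sup>2 = (Dv a b (p k) s')\<^sup>2 * (Dv a b (q k) s - Dv a b (q k) s')\<^sup>2"
        unfolding Y_def by (simp add: power_mult_distrib)
      also have "\<dots> \<le> ((b - a) * PP (p k)) * (hh i * EE (q k) i)"
      proof (rule mult_mono)
        show "(Dv a b (q k) s - Dv a b (q k) s')\<^sup>2 \<le> hh i * EE (q k) i"
          unfolding hh_def EE_def by (rule Dv_diff_sq[OF sp(2) i s' s])
        show "(Dv a b (p k) s')\<^sup>2 \<le> (b - a) * PP (p k)"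
          unfolding PP_def by (rule Dv_sq_bound[OF sp(1) sp(3) sab(2)])
        show "0 \<le> (b - a) * PP (p k)" using ba PP_nonneg[OF sp(1)] by simp
      qed simp
      also have "\<dots> \<le> ((b - a) * Ps) * (hh i * EE (q k) i)"
        using h ba EE_nonneg[OF sp(2) i] Ps(1)[of k] by (intro mult_right_mono) auto
      finally show ?thesis .
    qed
    have "(X k + Y k)\<^sup>2 \<le> 2 * (X k)\<^sup>2 + 2 * (Y k)\<^sup>2"
    proof -
      have "0 \<le> (X k - Y k)\<^sup>2" by simp
      then show ?thesis by (simp add: power2_eq_square algebra_simps)
    qed
    then show "(X k + Y k)\<^sup>2 \<le> 2 * (hh i * EE (p k) i * ((b - a) * Qs)) + 2 * (((b - a) * Ps) * (hh i * EE (q k) i))"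
      using X Y by linarith
  qed simp
  also have "\<dots> = 2 * real CARD('d) * hh i * (b - a) *
     ((\<Sum>k\<in>UNIV. EE (p k) i) * Qs + Ps * (\<Sum>k\<in>UNIV. EE (q k) i))"
  proof -
    have e: "\<And>k. 2 * (hh i * EE (p k) i * ((b - a) * Qs)) + 2 * (((b - a) * Ps) * (hh i * EE (q k) i))
       = (2 * hh i * (b - a) * Qs) * EE (p k) i + (2 * hh i * (b - a) * Ps) * EE (q k) i"
      by (simp add: algebra_simps)
    have eq: "(\<Sum>k\<in>UNIV. 2 * (hh i * EE (p k) i * ((b - a) * Qs)) + 2 * (((b - a) * Ps) * (hh i * EE (q k) i)))
       = (2 * hh i * (b - a) * Qs) * (\<Sum>k\<in>UNIV. EE (p k) i) + (2 * hh i * (b - a) * Ps) * (\<Sum>k\<in>UNIV. EE (q k) i)"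
      unfolding e sum.distrib sum_distrib_left ..
    define S1 where "S1 = (\<Sum>k\<in>UNIV. EE (p k) i)"
    define S2 where "S2 = (\<Sum>k\<in>UNIV. EE (q k) i)"
    have "real CARD('d) * ((2 * hh i * (b - a) * Qs) * S1 + (2 * hh i * (b - a) * Ps) * S2)
        = 2 * real CARD('d) * hh i * (b - a) * (S1 * Qs + Ps * S2)"
      by (simp add: algebra_simps)
    then show ?thesis unfolding eq S1_def S2_def .
  qed
  finally show ?thesis unfolding Ps_def Qs_def .
qed


lemma spline_cont: assumes "spline 3 1 M x v" shows "continuous_on {a..b} v"
proof -
  obtain D where D: "\<And>t. t \<in> {a..b} \<Longrightarrow> (v has_real_derivative D t) (at t within {a..b})"
    and "continuous_on {a..b} D" using C1[OF assms] by blast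
  show ?thesis by (rule DERIV_continuous_on[OF D])
qed

lemma H2_bound:
  fixes p :: "'d::finite \<Rightarrow> real \<Rightarrow> real"
  assumes p: "\<And>k. spline 3 1 M x (p k)"
  shows "(\<Sum>k\<in>UNIV. PP (p k)) \<le> (H2norm a b p)\<^sup>2" "0 \<le> H2norm a b p"
proof -
  define S where "S = (\<Sum>k\<in>UNIV. integral {a..b}
      (\<lambda>t. (p k t)\<^sup>2 + (Dv a b (p k) t)\<^sup>2 + (Dv a b (Dv a b (p k)) t)\<^sup>2))"
  have le: "PP (p k) \<le> integral {a..b} (\<lambda>t. (p k t)\<^sup>2 + (Dv a b (p k) t)\<^sup>2 + (Dv a b (Dv a b (p k)) t)\<^sup>2)" for k
  proof -
    have i1: "(\<lambda>t. (p k t)\<^sup>2 + (Dv a b (p k) t)\<^sup>2) integrable_on {a..b}"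
      by (rule integrable_continuous_interval)
         (use spline_cont[OF p] Dv_cont[OF p] in \<open>auto intro!: continuous_intros\<close>)
    have i2: "(\<lambda>t. (Dv a b (Dv a b (p k)) t)\<^sup>2) integrable_on {a..b}" by (rule Dv2_sq_int[OF p])
    show ?thesis unfolding PP_def
      by (rule integral_le[OF i2 integrable_add[OF i1 i2]]) auto
  qed
  have "(\<Sum>k\<in>UNIV. PP (p k)) \<le> S" unfolding S_def by (rule sum_mono[OF le])
  moreover have "0 \<le> (\<Sum>k\<in>UNIV. PP (p k))" using PP_nonneg[OF p] by (simp add: sum_nonneg)
  ultimately show "(\<Sum>k\<in>UNIV. PP (p k)) \<le> (H2norm a b p)\<^sup>2" "0 \<le> H2norm a b p"
    unfolding H2norm_def S_def[symmetric] by auto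
qed

lemma main_est:
  fixes p q :: "'d::finite \<Rightarrow> real \<Rightarrow> real"
  assumes lam: "spline 2 0 M x lam" and p: "\<And>k. SD (p k)" and q: "\<And>k. SD (q k)"
  shows "\<bar>ssum (\<lambda>t. lam t * GG p q t)\<bar> \<le> CC a b CARD('d) * H2norm a b p * H2norm a b q * Hm1norm a b lam"
proof -
  define g where "g = GG p q"
  have sp: "spline 3 1 M x (p k)" "spline 3 1 M x (q k)" for k
    using p[of k] q[of k] unfolding SD_def by auto
  have ga: "g a = 0" "g b = 0" unfolding g_def GG_def using p unfolding SD_def by auto
  have H: "is_H10 a b (phi g) (dphi g)" by (rule phi_H10[OF ga])
  have lc: "continuous_on {a..b} lam" using lam unfolding spline_def x0 xM by simp
  have "((\<lambda>t. lam t * phi g t) has_integral ssum (\<lambda>t. lam t * g t)) {a..b}" by (rule phi_simpson[OF lam])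
  then have 1: "\<bar>ssum (\<lambda>t. lam t * g t)\<bar> \<le> H1norm_w a b (phi g) (dphi g) * Hm1norm a b lam"
    using Hm1_ge[OF ab lc H] by (simp add: integral_unique)
  define Ps where "Ps = (\<Sum>k\<in>UNIV. PP (p k))"
  define Qs where "Qs = (\<Sum>k\<in>UNIV. PP (q k))"
  define W where "W i = (\<Sum>k\<in>UNIV. EE (p k) i) * Qs + Ps * (\<Sum>k\<in>UNIV. EE (q k) i)" for i
  define d where "d = real CARD('d)"
  have Ps0: "0 \<le> Ps" "0 \<le> Qs" unfolding Ps_def Qs_def using PP_nonneg sp by (auto intro!: sum_nonneg)
  have ba: "0 < b - a" using ab by simp
  have D: "integral {a..b} (\<lambda>t. (dphi g t)\<^sup>2) \<le> 8 * K0 * d * (b - a) * Ps * Qs"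
  proof -
    have "integral {a..b} (\<lambda>t. (dphi g t)\<^sup>2) = (\<Sum>i=1..M. integral {x(i-1)..x i} (\<lambda>t. (dphi g t)\<^sup>2))"
      using dphi_sq_integral(1) by (simp add: integral_unique)
    also have "\<dots> \<le> (\<Sum>i=1..M. K0 * (4 * d * (b - a)) * W i)"
    proof (rule sum_mono)
      fix i assume i: "i \<in> {1..M}"
      have h: "hh i > 0" by (rule hh_pos[OF i])
      have m: "mid i \<in> {x(i-1)..x i}" using xinc[OF i] unfolding mid_def by auto
      have A: "(g (x(i-1)) - g (mid i))\<^sup>2 \<le> 2 * d * hh i * (b - a) * W i"
        unfolding g_def W_def Ps_def Qs_def d_def by (rule GG_diff[OF p q i _ m]) (use xinc[OF i] in auto)
      have B: "(g (x i) - g (mid i))\<^sup>2 \<le> 2 * d * hh i * (b - a) * W i"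
        unfolding g_def W_def Ps_def Qs_def d_def by (rule GG_diff[OF p q i _ m]) (use xinc[OF i] in auto)
      have "integral {x(i-1)..x i} (\<lambda>t. (dphi g t)\<^sup>2) \<le> K0 * ((g (x(i-1)) - g (mid i))\<^sup>2 + (g (x i) - g (mid i))\<^sup>2) / hh i"
        by (rule dphi_elem_bound[OF i])
      also have "\<dots> \<le> K0 * (4 * d * hh i * (b - a) * W i) / hh i"
        using A B h by (intro divide_right_mono mult_left_mono) (auto simp: K0_def)
      also have "\<dots> = K0 * (4 * d * (b - a)) * W i" using h by simp
      finally show "integral {x(i-1)..x i} (\<lambda>t. (dphi g t)\<^sup>2) \<le> K0 * (4 * d * (b - a)) * W i" .
    qed
    also have "\<dots> = K0 * (4 * d * (b - a)) * (\<Sum>i=1..M. W i)" by (simp add: sum_distrib_left)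
    also have "(\<Sum>i=1..M. W i) = 2 * Ps * Qs"
    proof -
      have "(\<Sum>i=1..M. \<Sum>k\<in>UNIV. EE (p k) i) = Ps" unfolding Ps_def
        by (subst sum.swap) (simp add: PP_sum[OF sp(1)])
      moreover have "(\<Sum>i=1..M. \<Sum>k\<in>UNIV. EE (q k) i) = Qs" unfolding Qs_def
        by (subst sum.swap) (simp add: PP_sum[OF sp(2)])
      moreover have "(\<Sum>i=1..M. W i) = (\<Sum>i=1..M. \<Sum>k\<in>UNIV. EE (p k) i) * Qs + Ps * (\<Sum>i=1..M. \<Sum>k\<in>UNIV. EE (q k) i)"
        unfolding W_def by (simp add: sum.distrib sum_distrib_left sum_distrib_right)
      ultimately show ?thesis by simp
    qed
    finally show ?thesis by (simp add: algebra_simps)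
  qed
  have Pphi: "integral {a..b} (\<lambda>t. (phi g t)\<^sup>2) \<le> (b - a)\<^sup>2 * integral {a..b} (\<lambda>t. (dphi g t)\<^sup>2)"
  proof -
    define J where "J = integral {a..b} (\<lambda>t. (dphi g t)\<^sup>2)"
    have di: "dphi g integrable_on {a..b}" by (rule H10_cont(2)[OF H])
    have d2: "(\<lambda>t. (dphi g t)\<^sup>2) integrable_on {a..b}" by (rule H10_sq(2)[OF H])
    have "integral {a..b} (\<lambda>t. (phi g t)\<^sup>2) \<le> integral {a..b} (\<lambda>t. (b - a) * J)"
    proof (rule integral_le[OF H10_sq(1)[OF H]])
      fix t assume t: "t \<in> {a..b}"
      have "phi g t = integral {a..t} (dphi g)" using H t unfolding is_H10_def by auto
      then have "(phi g t)\<^sup>2 \<le> (t - a) * integral {a..t} (\<lambda>t. (dphi g t)\<^sup>2)"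
        using cs_int[OF integrable_subinterval_real[OF di] integrable_subinterval_real[OF d2], of a t] t by auto
      also have "\<dots> \<le> (b - a) * J" unfolding J_def
      proof (rule mult_mono)
        show "integral {a..t} (\<lambda>t. (dphi g t)\<^sup>2) \<le> integral {a..b} (\<lambda>t. (dphi g t)\<^sup>2)"
          by (rule integral_sub_le[OF d2]) (use t in auto)
        show "0 \<le> integral {a..t} (\<lambda>t. (dphi g t)\<^sup>2)"
          by (rule integral_nonneg[OF integrable_subinterval_real[OF d2]]) (use t in auto)
      qed (use t in auto)
      finally show "(phi g t)\<^sup>2 \<le> (b - a) * J" .
    qed (rule integrable_const_ivl)
    also have "\<dots> = (b - a)\<^sup>2 * J" using ab by (simp add: power2_eq_square)
    finally show ?thesis unfolding J_def .
  qed
  have H1sq: "(H1norm_w a b (phi g) (dphi g))\<^sup>2 \<le> ((1 + (b - a)\<^sup>2) * (8 * K0 * d * (b - a))) * (Ps * Qs)"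
  proof -
    have "(H1norm_w a b (phi g) (dphi g))\<^sup>2 = integral {a..b} (\<lambda>t. (phi g t)\<^sup>2) + integral {a..b} (\<lambda>t. (dphi g t)\<^sup>2)"
      using H10_sq(6,3)[OF H] by simp
    also have "\<dots> \<le> (1 + (b - a)\<^sup>2) * integral {a..b} (\<lambda>t. (dphi g t)\<^sup>2)"
      using Pphi by (simp add: algebra_simps)
    also have "\<dots> \<le> (1 + (b - a)\<^sup>2) * (8 * K0 * d * (b - a) * Ps * Qs)"
      using D by (intro mult_left_mono) auto
    finally show ?thesis by (simp add: algebra_simps)
  qed
  have H1: "H1norm_w a b (phi g) (dphi g) \<le> CC a b CARD('d) * H2norm a b p * H2norm a b q"
  proof -
    have n: "0 \<le> H1norm_w a b (phi g) (dphi g)" unfolding H1norm_w_def using H10_sq(3,4,5)[OF H] by simp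
    have "H1norm_w a b (phi g) (dphi g) = sqrt ((H1norm_w a b (phi g) (dphi g))\<^sup>2)" using n by simp
    also have "\<dots> \<le> sqrt (((1 + (b - a)\<^sup>2) * (8 * K0 * d * (b - a))) * (Ps * Qs))"
      using H1sq by (rule real_sqrt_le_mono)
    also have "\<dots> = CC a b CARD('d) * (sqrt Ps * sqrt Qs)"
    proof -
      have "(1 + (b - a)\<^sup>2) * (8 * K0 * d * (b - a)) = (1 + (b - a)\<^sup>2) * (8 * (2 * 436\<^sup>2) * real CARD('d) * (b - a))"
        unfolding K0_def d_def by simp
      then show ?thesis unfolding CC_def by (simp only: real_sqrt_mult)
    qed
    also have "\<dots> \<le> CC a b CARD('d) * (H2norm a b p * H2norm a b q)"
    proof (rule mult_left_mono)
      have "sqrt Ps \<le> H2norm a b p"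
        using real_sqrt_le_mono[OF H2_bound(1)[of p, OF sp(1)]] H2_bound(2)[of p, OF sp(1)] unfolding Ps_def by simp
      moreover have "sqrt Qs \<le> H2norm a b q"
        using real_sqrt_le_mono[OF H2_bound(1)[of q, OF sp(2)]] H2_bound(2)[of q, OF sp(2)] unfolding Qs_def by simp
      ultimately show "sqrt Ps * sqrt Qs \<le> H2norm a b p * H2norm a b q"
        by (intro mult_mono) (use Ps0 H2_bound(2)[of p, OF sp(1)] in auto)
    qed (use ba in \<open>simp add: CC_def add_nonneg_nonneg\<close>)
    finally show ?thesis by (simp add: mult.assoc)
  qed
  have "\<bar>ssum (\<lambda>t. lam t * g t)\<bar> \<le> CC a b CARD('d) * H2norm a b p * H2norm a b q * Hm1norm a b lam"
    using order_trans[OF 1 mult_right_mono[OF H1 Hm1_nonneg[OF ab lc]]] .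
  then show ?thesis unfolding g_def .
qed


lemma ssum_diff: "ssum (\<lambda>t. F t - G t) = ssum F - ssum G"
  unfolding ssum_def by (simp add: sum_subtractf[symmetric] algebra_simps)

lemma ssum_cong:
  assumes "\<And>t. t \<in> {a..b} \<Longrightarrow> F t = G t"
  shows "ssum F = ssum G"
  unfolding ssum_def
proof (rule sum.cong[OF refl])
  fix i assume i: "i \<in> {1..M}"
  have m: "mid i \<in> {a..b}" using xinc[OF i] elem_sub[OF i] unfolding mid_def by auto
  have "x (i-1) \<in> {a..b}" "x i \<in> {a..b}" using x_in i by auto
  then show "hh i / 6 * (F (x (i - 1)) + 4 * F (mid i) + F (x i)) = hh i / 6 * (G (x (i - 1)) + 4 * G (mid i) + G (x i))"
    using assms m by simp
qed

lemma Dv_diff: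
  assumes "spline 3 1 M x u1" "spline 3 1 M x u2" "t \<in> {a..b}"
  shows "Dv a b (\<lambda>t. u1 t - u2 t) t = Dv a b u1 t - Dv a b u2 t"
proof -
  obtain D1 where D1: "\<And>t. t \<in> {a..b} \<Longrightarrow> (u1 has_real_derivative D1 t) (at t within {a..b})"
    and "continuous_on {a..b} D1" using C1[OF assms(1)] by blast
  obtain D2 where D2: "\<And>t. t \<in> {a..b} \<Longrightarrow> (u2 has_real_derivative D2 t) (at t within {a..b})"
    and "continuous_on {a..b} D2" using C1[OF assms(2)] by blast
  have "Dv a b (\<lambda>t. u1 t - u2 t) t = D1 t - D2 t"
    by (rule Dv_D[OF DERIV_diff[OF D1 D2] assms(3)])
  then show ?thesis using Dv_D[OF D1 assms(3)] Dv_D[OF D2 assms(3)] by simp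
qed

lemma S31D_SD: "S31D M x v \<Longrightarrow> SD v"
  unfolding S31D_def SD_def x0 xM by auto

lemma S20_spline: "S20_0 M x v \<Longrightarrow> spline 2 0 M x v"
  unfolding S20_0_def by auto

lemma spline20_diff:
  assumes "spline 2 0 M x l1" "spline 2 0 M x l2"
  shows "spline 2 0 M x (\<lambda>t. l1 t - l2 t)"
proof -
  have c: "continuous_on {x 0..x M} (\<lambda>t. l1 t - l2 t)"
    using assms unfolding spline_def by (auto intro!: continuous_intros)
  have "pw_poly 2 M x (\<lambda>t. l1 t - l2 t)"
    unfolding pw_poly_def
  proof
    fix i assume i: "i \<in> {1..M}"
    have p1: "pw_poly 2 M x l1" "pw_poly 2 M x l2" using assms unfolding spline_def by auto
    show "\<exists>p. degree p \<le> 2 \<and> (\<forall>t\<in>{x (i - 1)..x i}. l1 t - l2 t = poly p t)"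
      by (rule exI[of _ "pp 2 l1 i - pp 2 l2 i"])
         (use pp[OF p1(1) i] pp[OF p1(2) i] in \<open>auto intro: order_trans[OF degree_diff_le]\<close>)
  qed
  then show ?thesis using c unfolding spline_def by simp
qed

lemma GG_fun: "(\<lambda>t. \<Sum>k\<in>UNIV. Dv (x 0) (x M) (p k) t * Dv (x 0) (x M) (q k) t) = GG p q"
  unfolding GG_def x0 xM by (rule ext) simp

lemma mesh_main:
  fixes u1 u2 v w :: "'d::finite \<Rightarrow> real \<Rightarrow> real"
  assumes u1: "\<And>k. spline 3 1 M x (u1 k)" and u2: "\<And>k. spline 3 1 M x (u2 k)"
    and e: "\<And>k. S31D M x (\<lambda>t. u1 k t - u2 k t)"
    and l1: "S20_0 M x lam1" and l2: "S20_0 M x lam2"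
    and v: "\<And>k. S31D M x (v k)" and mu: "S20_0 M x mu"
    and w: "\<And>k. S31D M x (w k)" and eta: "S20_0 M x eta"
  shows "\<bar>DF M x u1 lam1 v mu w eta - DF M x u2 lam2 v mu w eta\<bar>
      \<le> (2 * CC a b CARD('d)) * (H2norm a b (\<lambda>k t. u1 k t - u2 k t) + Hm1norm a b (\<lambda>t. lam1 t - lam2 t))
          * Xnorm a b v mu * Xnorm a b w eta"
proof -
  define E where "E = (\<lambda>k t. u1 k t - u2 k t)"
  have eSD: "SD (E k)" for k unfolding E_def by (rule S31D_SD[OF e])
  have vSD: "SD (v k)" for k by (rule S31D_SD[OF v])
  have wSD: "SD (w k)" for k by (rule S31D_SD[OF w])
  have dl: "spline 2 0 M x (\<lambda>t. lam1 t - lam2 t)"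
    by (rule spline20_diff[OF S20_spline[OF l1] S20_spline[OF l2]])
  have GGe: "GG u1 q t - GG u2 q t = GG E q t" if "t \<in> {a..b}" for q :: "'d \<Rightarrow> real \<Rightarrow> real" and t
  proof -
    have d: "Dv a b (\<lambda>t. u1 k t - u2 k t) t = Dv a b (u1 k) t - Dv a b (u2 k) t" for k
      by (rule Dv_diff[OF u1[of k] u2[of k] that])
    show ?thesis unfolding GG_def E_def d by (simp add: sum_subtractf[symmetric] algebra_simps)
  qed
  have "DF M x u1 lam1 v mu w eta - DF M x u2 lam2 v mu w eta
      = (ssum (\<lambda>t. lam1 t * GG v w t) - ssum (\<lambda>t. lam2 t * GG v w t))
      + (ssum (\<lambda>t. mu t * GG u1 w t) - ssum (\<lambda>t. mu t * GG u2 w t))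
      + (ssum (\<lambda>t. eta t * GG u1 v t) - ssum (\<lambda>t. eta t * GG u2 v t))"
  proof -
    have af: "a_form M x lam v w = (\<Sum>k\<in>UNIV. integral {x 0..x M} (\<lambda>t. Dv (x 0) (x M) (Dv (x 0) (x M) (v k)) t * Dv (x 0) (x M) (Dv (x 0) (x M) (w k)) t))
       + ssum (\<lambda>t. lam t * GG v w t)" for lam
      unfolding a_form_def GG_fun[of v w] dip_ssum ..
    have bf: "b_form M x u q lam = ssum (\<lambda>t. lam t * GG u q t)" for u q :: "'d \<Rightarrow> real \<Rightarrow> real" and lam
      unfolding b_form_def GG_fun[of u q] dip_ssum ..
    show ?thesis unfolding DF_def af bf by linarith
  qed
  also have "\<dots> = ssum (\<lambda>t. (lam1 t - lam2 t) * GG v w t) + ssum (\<lambda>t. mu t * GG E w t)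
      + ssum (\<lambda>t. eta t * GG E v t)"
  proof -
    have 1: "ssum (\<lambda>t. lam1 t * GG v w t) - ssum (\<lambda>t. lam2 t * GG v w t) = ssum (\<lambda>t. (lam1 t - lam2 t) * GG v w t)"
      unfolding ssum_diff[symmetric] by (simp add: algebra_simps)
    have 2: "ssum (\<lambda>t. mu t * GG u1 w t) - ssum (\<lambda>t. mu t * GG u2 w t) = ssum (\<lambda>t. mu t * GG E w t)"
      unfolding ssum_diff[symmetric] by (rule ssum_cong) (simp add: GGe[symmetric] algebra_simps)
    have 3: "ssum (\<lambda>t. eta t * GG u1 v t) - ssum (\<lambda>t. eta t * GG u2 v t) = ssum (\<lambda>t. eta t * GG E v t)"
      unfolding ssum_diff[symmetric] by (rule ssum_cong) (simp add: GGe[symmetric] algebra_simps)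
    show ?thesis unfolding 1 2 3 ..
  qed
  finally have eq: "DF M x u1 lam1 v mu w eta - DF M x u2 lam2 v mu w eta = 
      ssum (\<lambda>t. (lam1 t - lam2 t) * GG v w t) + ssum (\<lambda>t. mu t * GG E w t) + ssum (\<lambda>t. eta t * GG E v t)" .
  define C where "C = CC a b CARD('d)"
  have C0: "0 \<le> C" unfolding C_def CC_def using ab by (simp add: add_nonneg_nonneg)
  note T1 = main_est[where p=v and q=w, OF dl vSD wSD, folded C_def]
  note T2 = main_est[where p=E and q=w, OF S20_spline[OF mu] eSD wSD, folded C_def]
  note T3 = main_est[where p=E and q=v, OF S20_spline[OF eta] eSD vSD, folded C_def]
  have spl: "spline 3 1 M x (E k)" "spline 3 1 M x (v k)" "spline 3 1 M x (w k)" for k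
    using eSD vSD wSD unfolding SD_def by auto
  have cont2: "continuous_on {a..b} l" if "spline 2 0 M x l" for l
    using that unfolding spline_def x0 xM by simp
  define he where "he = H2norm a b E"
  define hv where "hv = H2norm a b v"
  define hw where "hw = H2norm a b w"
  define nl where "nl = Hm1norm a b (\<lambda>t. lam1 t - lam2 t)"
  define nm where "nm = Hm1norm a b mu"
  define ne where "ne = Hm1norm a b eta"
  have nn: "0 \<le> he" "0 \<le> hv" "0 \<le> hw" "0 \<le> nl" "0 \<le> nm" "0 \<le> ne"
    unfolding he_def hv_def hw_def nl_def nm_def ne_def
    using H2_bound(2)[of E, OF spl(1)] H2_bound(2)[of v, OF spl(2)] H2_bound(2)[of w, OF spl(3)]
      Hm1_nonneg[OF ab cont2[OF dl]] Hm1_nonneg[OF ab cont2[OF S20_spline[OF mu]]]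
      Hm1_nonneg[OF ab cont2[OF S20_spline[OF eta]]] by auto
  define Xv where "Xv = hv + nm"
  define Xw where "Xw = hw + ne"
  have "\<bar>DF M x u1 lam1 v mu w eta - DF M x u2 lam2 v mu w eta\<bar>
      \<le> C * hv * hw * nl + C * he * hw * nm + C * he * hv * ne"
  proof -
    have tri: "\<bar>A + B + D\<bar> \<le> \<bar>A\<bar> + \<bar>B\<bar> + \<bar>D\<bar>" for A B D :: real
      by (rule order_trans[OF abs_triangle_ineq add_right_mono[OF abs_triangle_ineq]])
    show ?thesis unfolding eq he_def hv_def hw_def nl_def nm_def ne_def
      using tri[of "ssum (\<lambda>t. (lam1 t - lam2 t) * GG v w t)" "ssum (\<lambda>t. mu t * GG E w t)" "ssum (\<lambda>t. eta t * GG E v t)"]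
        T1 T2 T3 by linarith
  qed
  also have "\<dots> \<le> (2 * C) * (he + nl) * Xv * Xw"
  proof -
    have le: "hv \<le> Xv" "nm \<le> Xv" "hw \<le> Xw" "ne \<le> Xw" "0 \<le> Xv" "0 \<le> Xw"
      unfolding Xv_def Xw_def using nn by auto
    have a1: "hv * hw * nl \<le> Xv * Xw * nl"
      by (rule mult_right_mono[OF mult_mono[OF le(1) le(3)]]) (use nn le in auto)
    have a2: "nm * hw * he \<le> Xv * Xw * he"
      by (rule mult_right_mono[OF mult_mono[OF le(2) le(3)]]) (use nn le in auto)
    have a3: "hv * ne * he \<le> Xv * Xw * he"
      by (rule mult_right_mono[OF mult_mono[OF le(1) le(4)]]) (use nn le in auto)
    have b1: "C * (hv * hw * nl) \<le> C * (Xv * Xw * nl)" by (rule mult_left_mono[OF a1 C0])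
    have b2: "C * (nm * hw * he) \<le> C * (Xv * Xw * he)" by (rule mult_left_mono[OF a2 C0])
    have b3: "C * (hv * ne * he) \<le> C * (Xv * Xw * he)" by (rule mult_left_mono[OF a3 C0])
    have b4: "0 \<le> C * (Xv * Xw * nl)" using C0 nn le by simp
    have e1: "C * hv * hw * nl = C * (hv * hw * nl)" "C * he * hw * nm = C * (nm * hw * he)"
      "C * he * hv * ne = C * (hv * ne * he)" by (simp_all only: mult_ac)
    have e2: "(2 * C) * (he + nl) * Xv * Xw = C * (Xv * Xw * nl) + C * (Xv * Xw * nl) + 2 * (C * (Xv * Xw * he))"
      by (simp add: algebra_simps)
    show ?thesis unfolding e1 e2 using b1 b2 b3 b4 by linarith
  qed
  finally have R: "\<bar>DF M x u1 lam1 v mu w eta - DF M x u2 lam2 v mu w eta\<bar> \<le> (2 * C) * (he + nl) * Xv * Xw" .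
  show ?thesis using R unfolding Xnorm_def by (simp only: C_def he_def nl_def Xv_def Xw_def hv_def nm_def hw_def ne_def E_def)
qed

end

theorem mainTheorem9:
  fixes a b c0 :: real
  assumes "a < b"
  shows "\<exists>c>0. \<forall>M x. is_mesh a b M x \<and> quasi_uniform c0 M x \<longrightarrow>
    (\<forall>(u1 :: 'd::finite \<Rightarrow> real \<Rightarrow> real) u2 lam1 lam2 v mu w eta.
       (\<forall>k. spline 3 1 M x (u1 k)) \<and> (\<forall>k. spline 3 1 M x (u2 k))
     \<and> (\<forall>k. S31D M x (\<lambda>t. u1 k t - u2 k t))
     \<and> S20_0 M x lam1 \<and> S20_0 M x lam2
     \<and> (\<forall>k. S31D M x (v k)) \<and> S20_0 M x mu
     \<and> (\<forall>k. S31D M x (w k)) \<and> S20_0 M x eta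
     \<longrightarrow> \<bar>DF M x u1 lam1 v mu w eta - DF M x u2 lam2 v mu w eta\<bar>
         \<le> c * (H2norm a b (\<lambda>k t. u1 k t - u2 k t) + Hm1norm a b (\<lambda>t. lam1 t - lam2 t))
             * Xnorm a b v mu * Xnorm a b w eta)"
proof (intro exI[of _ "2 * CC a b CARD('d)"] conjI allI impI)
  show "0 < 2 * CC a b CARD('d)" unfolding CC_def using assms
    by (simp add: add_pos_nonneg)
next
  fix M x assume "is_mesh a b M x \<and> quasi_uniform c0 M x"
  then interpret mesh a b M x by (unfold_locales) simp
  fix u1 u2 v w :: "'d \<Rightarrow> real \<Rightarrow> real" and lam1 lam2 mu eta :: "real \<Rightarrow> real"
  assume h: "(\<forall>k. spline 3 1 M x (u1 k)) \<and> (\<forall>k. spline 3 1 M x (u2 k))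
     \<and> (\<forall>k. S31D M x (\<lambda>t. u1 k t - u2 k t))
     \<and> S20_0 M x lam1 \<and> S20_0 M x lam2
     \<and> (\<forall>k. S31D M x (v k)) \<and> S20_0 M x mu
     \<and> (\<forall>k. S31D M x (w k)) \<and> S20_0 M x eta"
  show "\<bar>DF M x u1 lam1 v mu w eta - DF M x u2 lam2 v mu w eta\<bar>
         \<le> 2 * CC a b CARD('d) * (H2norm a b (\<lambda>k t. u1 k t - u2 k t) + Hm1norm a b (\<lambda>t. lam1 t - lam2 t))
             * Xnorm a b v mu * Xnorm a b w eta"
    using mesh_main[of u1 u2 lam1 lam2 v mu w eta] h by blast
qed

end
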